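(* Let $G\subset\mathbb{R}^2$ be an open set with $0\in G$, let $c>0$, and let $F:G\to\mathbb{R}^2$ be a locally DC mapping such that $F(0)=0$ and $F'_+(0,(1,0))=(c,0)$. Let $S\subset G$ be an (s)-set. Then there exist $a>0$ and $b>0$ such that $$S^*\coloneqq F\big(S\cap((-\infty,a]\times\mathbb{R})\big)\cap((-\infty,b]\times\mathbb{R})$$ is an (s)-set.
   Context: A function on an open convex set is DC if it is the difference of two convex functions; a mapping is DC if all its components are DC; a mapping on an open set $G$ is locally DC if each point of $G$ has a convex open neighbourhood on which it is DC. $F'_+(x,v)=\lim_{t\to0+}(F(x+tv)-F(x))/t$ is the one-sided directional derivative. A function defined on a nonempty set $D\subset\mathbb{R}$ is DCR if it is the restriction of a DC function defined on $\mathbb{R}$. A nonempty closed set $S\subset\mathbb{R}^2$ is an (s)-set if there exists $r>0$ such that (a) $S\subset\bigcup_{i=1}^k\operatorname{graph} f_i$ for some DCR functions $f_i:[0,r]\to\mathbb{R}$ with $f_i(0)=(f_i)'_+(0)=0$, and (b) $S=\bigcup_{h\in H}\operatorname{graph} h$ for some family $H$ of continuous functions on $[0,r]$. *)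

theory Defs
  imports "HOL-Analysis.Analysis"
begin

definition DC_on :: "'a::real_vector set \<Rightarrow> ('a \<Rightarrow> real) \<Rightarrow> bool" where
  "DC_on U f \<longleftrightarrow> (\<exists>g h. convex_on U g \<and> convex_on U h \<and> (\<forall>x\<in>U. f x = g x - h x))"

definition DC_map_on :: "(real \<times> real) set \<Rightarrow> (real \<times> real \<Rightarrow> real \<times> real) \<Rightarrow> bool" where
  "DC_map_on U F \<longleftrightarrow> DC_on U (\<lambda>x. fst (F x)) \<and> DC_on U (\<lambda>x. snd (F x))"

definition locally_DC_map :: "(real \<times> real) set \<Rightarrow> (real \<times> real \<Rightarrow> real \<times> real) \<Rightarrow> bool" where
  "locally_DC_map G F \<longleftrightarrow>
     (\<forall>x\<in>G. \<exists>U. open U \<and> convex U \<and> x \<in> U \<and> U \<subseteq> G \<and> DC_map_on U F)"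

definition has_onesided_dirderiv :: "('a::real_normed_vector \<Rightarrow> 'b::real_normed_vector) \<Rightarrow> 'a \<Rightarrow> 'a \<Rightarrow> 'b \<Rightarrow> bool" where
  "has_onesided_dirderiv F x v D \<longleftrightarrow>
     ((\<lambda>t. (F (x + t *\<^sub>R v) - F x) /\<^sub>R t) \<longlongrightarrow> D) (at_right 0)"

definition DCR_on :: "real set \<Rightarrow> (real \<Rightarrow> real) \<Rightarrow> bool" where
  "DCR_on D f \<longleftrightarrow> D \<noteq> {} \<and> (\<exists>g. DC_on UNIV g \<and> (\<forall>x\<in>D. f x = g x))"

definition graph_on :: "real set \<Rightarrow> (real \<Rightarrow> real) \<Rightarrow> (real \<times> real) set" where
  "graph_on D f = {(x, f x) | x. x \<in> D}"

definition s_set :: "(real \<times> real) set \<Rightarrow> bool" where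
  "s_set S \<longleftrightarrow> S \<noteq> {} \<and> closed S \<and>
     (\<exists>r>0.
        (\<exists>Fs. finite Fs \<and>
           (\<forall>f\<in>Fs. DCR_on {0..r} f \<and> f 0 = 0 \<and>
                    has_onesided_dirderiv f 0 1 0) \<and>
           S \<subseteq> (\<Union>f\<in>Fs. graph_on {0..r} f)) \<and>
        (\<exists>H. (\<forall>h\<in>H. continuous_on {0..r} h) \<and>
           S = (\<Union>h\<in>H. graph_on {0..r} h)))"

end

theory Submission
  imports Defs
begin

definition slope :: "(real \<Rightarrow> real) \<Rightarrow> real \<Rightarrow> real \<Rightarrow> real" where
  "slope k s t = (k t - k s) / (t - s)"

lemma convex_slope3:
  assumes "convex_on I k" "s \<in> I" "u \<in> I" "s < t" "t < u"
  shows "slope k s t \<le> slope k t u" "slope k s t \<le> slope k s u" "slope k s u \<le> slope k t u"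
proof -
  have a: "(k s - k t) / (s - t) \<le> (k s - k u) / (s - u)"
   and b: "(k s - k u) / (s - u) \<le> (k t - k u) / (t - u)"
    using convex_on_slope_le[OF assms] by auto
  have e1: "slope k s t = (k s - k t) / (s - t)" unfolding slope_def
    by (metis minus_diff_eq minus_divide_divide)
  have e2: "slope k s u = (k s - k u) / (s - u)" unfolding slope_def
    by (metis minus_diff_eq minus_divide_divide)
  have e3: "slope k t u = (k t - k u) / (t - u)" unfolding slope_def
    by (metis minus_diff_eq minus_divide_divide)
  show "slope k s t \<le> slope k t u" "slope k s t \<le> slope k s u" "slope k s u \<le> slope k t u"
    using a b e1 e2 e3 by linarith+
qed

lemma slope3_convex:
  assumes I: "convex I"
    and H: "\<And>s t u. s \<in> I \<Longrightarrow> u \<in> I \<Longrightarrow> s < t \<Longrightarrow> t < u \<Longrightarrow> slope k s t \<le> slope k t u"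
  shows "convex_on I k"
proof (rule convex_on_linorderI[OF _ I])
  fix t x y :: real assume t: "0 < t" "t < 1" and xy: "x \<in> I" "y \<in> I" "x < y"
  define z where "z = (1 - t) *\<^sub>R x + t *\<^sub>R y"
  have z1: "z - x = t * (y - x)" "y - z = (1 - t) * (y - x)" unfolding z_def by (simp_all add: algebra_simps)
  have "0 < t * (y - x)" "0 < (1 - t) * (y - x)" using t xy by simp_all
  have "x < z" using z1(1) \<open>0 < t * (y - x)\<close> by (metis diff_gt_0_iff_gt)
  have "z < y" using z1(2) \<open>0 < (1 - t) * (y - x)\<close> by (metis diff_gt_0_iff_gt)
  note xz = \<open>x < z\<close> \<open>z < y\<close>
  from H[OF xy(1,2) xz] have "(k z - k x) / (t * (y - x)) \<le> (k y - k z) / ((1 - t) * (y - x))"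
    by (simp only: slope_def z1)
  hence "(1 - t) * (k z - k x) \<le> t * (k y - k z)"
    using t xy by (simp add: divide_simps mult.commute mult.left_commute)
  thus "k z \<le> (1 - t) * k x + t * k y" by (simp add: algebra_simps)
qed

lemma convex_extend:
  fixes k :: "real \<Rightarrow> real"
  assumes ab: "\<alpha> \<le> \<beta>" and cv: "convex_on {\<alpha>..\<beta>} k" and K: "K \<ge> 0"
    and lip: "\<And>x y. x \<in> {\<alpha>..\<beta>} \<Longrightarrow> y \<in> {\<alpha>..\<beta>} \<Longrightarrow> \<bar>k x - k y\<bar> \<le> K * \<bar>x - y\<bar>"
  shows "\<exists>k'. convex_on UNIV k' \<and> (\<forall>x\<in>{\<alpha>..\<beta>}. k' x = k x)"
proof -
  define cl where "cl x = max \<alpha> (min \<beta> x)" for x :: real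
  define k' where "k' x = k (cl x) + K * \<bar>x - cl x\<bar>" for x
  have clI: "cl x \<in> {\<alpha>..\<beta>}" for x using ab unfolding cl_def by auto
  have key: "k' x \<le> k y + K * \<bar>x - y\<bar>" if y: "y \<in> {\<alpha>..\<beta>}" for x y
  proof -
    have d: "\<bar>cl x - y\<bar> + \<bar>x - cl x\<bar> = \<bar>x - y\<bar>" using y ab unfolding cl_def by auto
    have "k (cl x) \<le> k y + K * \<bar>cl x - y\<bar>" using lip[OF clI[of x] y] by linarith
    hence "k' x \<le> k y + K * (\<bar>cl x - y\<bar> + \<bar>x - cl x\<bar>)" unfolding k'_def by (simp add: algebra_simps)
    thus ?thesis using d by simp
  qed
  have "convex_on UNIV k'"
  proof (rule convex_onI)
    fix t x y :: real assume t: "0 < t" "t < 1"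
    define y' where "y' = (1 - t) * cl x + t * cl y"
    have ax: "\<alpha> \<le> cl x" "cl x \<le> \<beta>" "\<alpha> \<le> cl y" "cl y \<le> \<beta>" using clI[of x] clI[of y] by auto
    have "(1 - t) * \<alpha> \<le> (1 - t) * cl x" "t * \<alpha> \<le> t * cl y"
      "(1 - t) * cl x \<le> (1 - t) * \<beta>" "t * cl y \<le> t * \<beta>"
      using ax t by (simp_all add: mult_left_mono)
    hence y'I: "y' \<in> {\<alpha>..\<beta>}" unfolding y'_def by (auto simp: algebra_simps)
    have c1: "k y' \<le> (1 - t) * k (cl x) + t * k (cl y)"
      using convex_onD[OF cv, of t "cl x" "cl y"] clI[of x] clI[of y] t unfolding y'_def by simp
    have "\<bar>((1 - t) * x + t * y) - y'\<bar> = \<bar>(1 - t) * (x - cl x) + t * (y - cl y)\<bar>"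
      unfolding y'_def by (simp add: algebra_simps)
    also have "\<dots> \<le> (1 - t) * \<bar>x - cl x\<bar> + t * \<bar>y - cl y\<bar>"
      using abs_triangle_ineq[of "(1 - t) * (x - cl x)" "t * (y - cl y)"] t
      by (simp add: abs_mult)
    finally have c2: "\<bar>((1 - t) * x + t * y) - y'\<bar> \<le> (1 - t) * \<bar>x - cl x\<bar> + t * \<bar>y - cl y\<bar>" .
    have "k' ((1 - t) * x + t * y) \<le> k y' + K * \<bar>((1 - t) * x + t * y) - y'\<bar>" using key[OF y'I] .
    also have "\<dots> \<le> (1 - t) * k (cl x) + t * k (cl y) + K * ((1 - t) * \<bar>x - cl x\<bar> + t * \<bar>y - cl y\<bar>)"
      using c1 mult_left_mono[OF c2 K] by linarith
    also have "\<dots> = (1 - t) * k' x + t * k' y" unfolding k'_def by (simp add: algebra_simps)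
    finally show "k' ((1 - t) *\<^sub>R x + t *\<^sub>R y) \<le> (1 - t) * k' x + t * k' y" by simp
  qed simp
  moreover have "\<forall>x\<in>{\<alpha>..\<beta>}. k' x = k x" unfolding k'_def cl_def by auto
  ultimately show ?thesis by blast
qed

lemma DCR_from_parts:
  assumes b: "0 \<le> b" and P: "convex_on {0..b} P" and Q: "convex_on {0..b} Q" and K: "K \<ge> 0"
    and lP: "\<And>x y. x \<in> {0..b} \<Longrightarrow> y \<in> {0..b} \<Longrightarrow> \<bar>P x - P y\<bar> \<le> K * \<bar>x - y\<bar>"
    and lQ: "\<And>x y. x \<in> {0..b} \<Longrightarrow> y \<in> {0..b} \<Longrightarrow> \<bar>Q x - Q y\<bar> \<le> K * \<bar>x - y\<bar>"
    and eq: "\<And>x. x \<in> {0..b} \<Longrightarrow> \<phi> x = P x - Q x"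
  shows "DCR_on {0..b} \<phi>"
proof -
  obtain P' where P': "convex_on UNIV P'" "\<forall>x\<in>{0..b}. P' x = P x"
    using convex_extend[OF b P K lP] by blast
  obtain Q' where Q': "convex_on UNIV Q'" "\<forall>x\<in>{0..b}. Q' x = Q x"
    using convex_extend[OF b Q K lQ] by blast
  have "DC_on UNIV (\<lambda>x. P' x - Q' x)" unfolding DC_on_def using P'(1) Q'(1) by blast
  moreover have "\<forall>x\<in>{0..b}. \<phi> x = P' x - Q' x" using P' Q' eq by auto
  ultimately show ?thesis unfolding DCR_on_def using b by auto
qed

lemma slope_mult: "s \<noteq> t \<Longrightarrow> k t - k s = (t - s) * slope k s t"
  unfolding slope_def by simp

lemma slope_localize:
  fixes A :: "real \<Rightarrow> real"
  assumes eta: "\<eta> > 0" and cv: "convex_on {-\<eta>..\<eta>} A" and e: "\<epsilon> > 0"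
  shows "\<exists>\<delta> l. 0 < \<delta> \<and> \<delta> \<le> \<eta> \<and>
           (\<forall>s t. 0 \<le> s \<longrightarrow> s < t \<longrightarrow> t \<le> \<delta> \<longrightarrow> l \<le> slope A s t \<and> slope A s t \<le> l + \<epsilon>)"
proof -
  define SL where "SL = (\<lambda>s. slope A 0 s) ` {0<..\<eta>}"
  have bdd: "bdd_below SL"
  proof (rule bdd_belowI)
    fix x assume "x \<in> SL"
    then obtain s where s: "s \<in> {0<..\<eta>}" "x = slope A 0 s" unfolding SL_def by auto
    show "slope A (-\<eta>) 0 \<le> x" using convex_slope3(1)[OF cv, of "-\<eta>" s 0] s eta by auto
  qed
  have ne: "SL \<noteq> {}" unfolding SL_def using eta by auto
  define l where "l = Inf SL"
  have low: "l \<le> slope A 0 s" if "s \<in> {0<..\<eta>}" for s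
    unfolding l_def SL_def by (rule cInf_lower) (use that bdd SL_def in auto)
  have "Inf SL < l + \<epsilon>/2" unfolding l_def using e by simp
  from cInf_lessD[OF ne this] obtain s0 where s0: "s0 \<in> {0<..\<eta>}" "slope A 0 s0 < l + \<epsilon>/2"
    unfolding SL_def by auto
  define \<delta> where "\<delta> = s0 / 2"
  have main: "l \<le> slope A s t \<and> slope A s t \<le> l + \<epsilon>" if st: "0 \<le> s" "s < t" "t \<le> \<delta>" for s t
  proof
    have tI: "t \<in> {0<..\<eta>}" using st s0 unfolding \<delta>_def by auto
    show "l \<le> slope A s t"
    proof (cases "s = 0")
      case True thus ?thesis using low[OF tI] by simp
    next
      case False
      hence "slope A 0 t \<le> slope A s t" using convex_slope3(3)[OF cv, of 0 t s] st tI eta by auto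
      thus ?thesis using low[OF tI] by simp
    qed
    have "slope A s t \<le> slope A s s0" using convex_slope3(2)[OF cv, of s s0 t] st s0 eta unfolding \<delta>_def by auto
    moreover have "slope A s s0 \<le> l + \<epsilon>"
    proof -
      have a1: "A s - A 0 \<ge> s * l"
      proof (cases "s = 0")
        case False
        hence "s \<in> {0<..\<eta>}" using st tI by auto
        from low[OF this] have "s * l \<le> s * slope A 0 s" using st by (simp add: mult_left_mono)
        thus ?thesis using slope_mult[of 0 s A] False by simp
      qed simp
      have a2: "A s0 - A 0 \<le> s0 * (l + \<epsilon>/2)"
        using slope_mult[of 0 s0 A] s0 mult_left_mono[of "slope A 0 s0" "l + \<epsilon>/2" s0] by auto
      have "s * \<epsilon> \<le> s0 / 2 * \<epsilon>" using st e unfolding \<delta>_def by (simp add: mult_right_mono)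
      hence "A s0 - A s \<le> (s0 - s) * (l + \<epsilon>)" using a1 a2 by (simp add: algebra_simps)
      moreover have "s0 - s > 0" using st unfolding \<delta>_def using s0 by auto
      ultimately show ?thesis unfolding slope_def by (simp add: divide_simps mult.commute)
    qed
    ultimately show "slope A s t \<le> l + \<epsilon>" by simp
  qed
  show ?thesis
    apply (rule exI[of _ \<delta>], rule exI[of _ l])
    using main s0 unfolding \<delta>_def by auto
qed

definition invf :: "(real \<Rightarrow> real) \<Rightarrow> real \<Rightarrow> real \<Rightarrow> real" where
  "invf G \<delta> x = (THE t. t \<in> {0..\<delta>} \<and> G t = x)"

lemma invf_props:
  assumes d: "\<delta> > 0" and m: "m > 0" and cont: "continuous_on {0..\<delta>} G" and G0: "G 0 = 0"
    and sl: "\<And>s t. 0 \<le> s \<Longrightarrow> s < t \<Longrightarrow> t \<le> \<delta> \<Longrightarrow> m * (t - s) \<le> G t - G s"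
  shows "\<And>x. x \<in> {0..m*\<delta>} \<Longrightarrow> invf G \<delta> x \<in> {0..\<delta>} \<and> G (invf G \<delta> x) = x"
    and "\<And>t. t \<in> {0..\<delta>} \<Longrightarrow> invf G \<delta> (G t) = t"
    and "continuous_on {0..m*\<delta>} (invf G \<delta>)"
proof -
  have inj: "s = t" if "s \<in> {0..\<delta>}" "t \<in> {0..\<delta>}" "G s = G t" for s t
  proof (rule ccontr)
    assume "s \<noteq> t"
    then consider "s < t" | "t < s" by linarith
    thus False
    proof cases
      case 1
      hence "0 < m * (t - s)" using m by simp
      thus False using sl[of s t] that 1 by auto
    next
      case 2
      hence "0 < m * (s - t)" using m by simp
      thus False using sl[of t s] that 2 by auto
    qed
  qed
  show inv2: "invf G \<delta> (G t) = t" if "t \<in> {0..\<delta>}" for t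
    unfolding invf_def by (rule the_equality) (use that inj in blast)+
  show inv1: "invf G \<delta> x \<in> {0..\<delta>} \<and> G (invf G \<delta> x) = x" if x: "x \<in> {0..m*\<delta>}" for x
  proof -
    have "G \<delta> \<ge> m * \<delta>" using sl[of 0 \<delta>] d G0 by simp
    hence "\<exists>t. 0 \<le> t \<and> t \<le> \<delta> \<and> G t = x" using x G0 d
      by (intro IVT'[OF _ _ _ cont]) auto
    then obtain t where t: "t \<in> {0..\<delta>}" "G t = x" by auto
    thus ?thesis using inv2[OF t(1)] by simp
  qed
  have "continuous_on (G ` {0..\<delta>}) (invf G \<delta>)"
    by (rule continuous_on_inv[OF cont compact_Icc]) (use inv2 in auto)
  moreover have "{0..m*\<delta>} \<subseteq> G ` {0..\<delta>}" using inv1 by (metis image_eqI subsetI)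
  ultimately show "continuous_on {0..m*\<delta>} (invf G \<delta>)" using continuous_on_subset by blast
qed

lemma slope_lip:
  assumes "\<And>x y. x \<in> I \<Longrightarrow> y \<in> I \<Longrightarrow> x < y \<Longrightarrow> \<bar>slope k x y\<bar> \<le> K"
  shows "\<And>x y. x \<in> I \<Longrightarrow> y \<in> I \<Longrightarrow> \<bar>k x - k y\<bar> \<le> K * \<bar>x - y\<bar>"
proof -
  have *: "\<bar>k x - k y\<bar> \<le> K * \<bar>x - y\<bar>" if "x \<in> I" "y \<in> I" "x < y" for x y
  proof -
    have "\<bar>k y - k x\<bar> = (y - x) * \<bar>slope k x y\<bar>" using that unfolding slope_def by (simp add: abs_div)
    also have "\<dots> \<le> (y - x) * K" using assms[OF that] that by (simp add: mult_left_mono)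
    finally show ?thesis using that by (simp add: abs_minus_commute mult.commute)
  qed
  fix x y assume "x \<in> I" "y \<in> I"
  thus "\<bar>k x - k y\<bar> \<le> K * \<bar>x - y\<bar>"
    using *[of x y] *[of y x] by (cases x y rule: linorder_cases) (auto simp: abs_minus_commute)
qed

lemma slope_comp_inv:
  assumes "t1 \<noteq> t2" "x1 = G t1" "x2 = G t2" "\<psi> x1 = t1" "\<psi> x2 = t2"
  shows "slope (\<lambda>x. h (\<psi> x)) x1 x2 = slope h t1 t2 / slope G t1 t2"
  using assms unfolding slope_def by (simp add: divide_simps)

lemma key_ineq:
  fixes a1 a2 b1 b2 w1 w2 m M2 C :: real
  assumes m: "m > 0" and a: "m \<le> a1" "m \<le> a2" and w1: "0 \<le> w1" "w1 \<le> m/2"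
    and b1: "\<bar>b1\<bar> \<le> M2" and ca: "\<bar>a2 - a1\<bar> \<le> w2 - w1" and cb: "\<bar>b2 - b1\<bar> \<le> w2 - w1"
    and C: "C = 2 + 2 * M2 / m"
  shows "\<bar>b2 / a2 - b1 / a1\<bar> \<le> C * w2 / a2 - C * w1 / a1"
proof -
  define D where "D = w2 - w1"
  have D: "D \<ge> 0" using ca unfolding D_def by linarith
  have pa: "a1 > 0" "a2 > 0" using a m by auto
  have M2: "M2 \<ge> 0" using b1 by linarith
  have r1: "w2 * a1 - w1 * a2 \<ge> D * a1 / 2"
  proof -
    have "w2 * a1 - w1 * a2 = D * a1 + w1 * (a1 - a2)" unfolding D_def by (simp add: algebra_simps)
    moreover have "w1 * (a1 - a2) \<ge> - (w1 * D)"
    proof -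
      have "- D \<le> a1 - a2" using ca unfolding D_def by linarith
      from mult_left_mono[OF this w1(1)] show ?thesis by simp
    qed
    moreover have "w1 * D \<le> a1 / 2 * D" using w1 a D by (intro mult_right_mono) auto
    moreover have "a1 / 2 * D = D * a1 / 2" by simp
    ultimately show ?thesis by linarith
  qed
  have r2: "\<bar>b2 * a1 - b1 * a2\<bar> \<le> D * a1 + M2 * D"
  proof -
    have "b2 * a1 - b1 * a2 = (b2 - b1) * a1 + b1 * (a1 - a2)" by (simp add: algebra_simps)
    moreover have "\<bar>(b2 - b1) * a1\<bar> \<le> D * a1" using cb pa unfolding D_def by (simp add: abs_mult mult_right_mono)
    moreover have "\<bar>b1 * (a1 - a2)\<bar> \<le> M2 * D"
      using b1 ca M2 unfolding D_def abs_mult by (metis abs_ge_zero abs_minus_commute mult_mono)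
    moreover have "\<bar>(b2 - b1) * a1 + b1 * (a1 - a2)\<bar> \<le> \<bar>(b2 - b1) * a1\<bar> + \<bar>b1 * (a1 - a2)\<bar>"
      by (rule abs_triangle_ineq)
    ultimately show ?thesis by linarith
  qed
  have r3: "M2 * D \<le> M2 * D * a1 / m" using M2 D a m
    by (simp add: le_divide_eq mult_left_mono mult.assoc)
  have "C * (D * a1 / 2) = D * a1 + M2 * D * a1 / m" unfolding C by (simp add: field_simps)
  hence "\<bar>b2 * a1 - b1 * a2\<bar> \<le> C * (w2 * a1 - w1 * a2)"
  proof -
    have "C \<ge> 0" unfolding C using M2 m by simp
    from mult_left_mono[OF r1 this] have "C * (D * a1 / 2) \<le> C * (w2 * a1 - w1 * a2)" .
    thus ?thesis using r2 r3 \<open>C * (D * a1 / 2) = D * a1 + M2 * D * a1 / m\<close> by linarith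
  qed
  moreover have "b2 / a2 - b1 / a1 = (b2 * a1 - b1 * a2) / (a1 * a2)" using pa by (simp add: field_simps)
  moreover have "C * w2 / a2 - C * w1 / a1 = C * (w2 * a1 - w1 * a2) / (a1 * a2)" using pa by (simp add: field_simps)
  ultimately show ?thesis using pa by (simp add: abs_div divide_right_mono)
qed

lemma slope_add: "slope (\<lambda>t. f t + g t) s t = slope f s t + slope g s t"
  unfolding slope_def add_divide_distrib[symmetric] by (simp add: algebra_simps)
lemma slope_diff: "slope (\<lambda>t. f t - g t) s t = slope f s t - slope g s t"
  unfolding slope_def diff_divide_distrib[symmetric] by (simp add: algebra_simps)
lemma slope_cmul: "slope (\<lambda>t. c * f t) s t = c * slope f s t"
  unfolding slope_def by (simp add: right_diff_distrib)
lemma slope_id: "s \<noteq> t \<Longrightarrow> slope (\<lambda>t. t) s t = 1"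
  unfolding slope_def by simp
lemma e_form:
  fixes a b s C l X Y :: real
  assumes "a \<noteq> 0" "X = ((C/2) * s - C*l/2 + (1/2) * b) / a" "Y = ((C/2) * s - C*l/2 + (-1/2) * b) / a"
  shows "X = (C * (s - l) / a + b / a) / 2 \<and> Y = (C * (s - l) / a - b / a) / 2"
    and "X = (C * (s - l) + b) / (2 * a) \<and> Y = (C * (s - l) - b) / (2 * a)"
proof -
  have n1: "(C/2) * s - C*l/2 + (1/2) * b = (C * (s - l) + b) / 2"
    and n2: "(C/2) * s - C*l/2 + (-1/2) * b = (C * (s - l) - b) / 2" by (simp_all add: algebra_simps)
  have X: "X = (C * (s - l) + b) / 2 / a" and Y: "Y = (C * (s - l) - b) / 2 / a"
    using assms(2,3) unfolding n1 n2 by simp_all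
  show "X = (C * (s - l) / a + b / a) / 2 \<and> Y = (C * (s - l) / a - b / a) / 2"
    unfolding X Y by (simp add: add_divide_distrib diff_divide_distrib)
  show "X = (C * (s - l) + b) / (2 * a) \<and> Y = (C * (s - l) - b) / (2 * a)"
    unfolding X Y by simp
qed
lemma half_pm:
  fixes A B A' B' :: real
  assumes "\<bar>B' - B\<bar> \<le> A' - A"
  shows "(A + B) / 2 \<le> (A' + B') / 2 \<and> (A - B) / 2 \<le> (A' - B') / 2"
  using assms by (auto simp: abs_le_iff)
lemma slope_lin: "s \<noteq> t \<Longrightarrow> slope (\<lambda>t. c * t) s t = c"
  unfolding slope_def by (simp add: right_diff_distrib[symmetric])
lemma slope_P: "s \<noteq> t \<Longrightarrow> slope (\<lambda>t. (C/2) * w t + ((- (C*l/2)) * t + e * g t)) s t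
    = (C/2) * slope w s t - C*l/2 + e * slope g s t"
proof -
  assume ne: "s \<noteq> t"
  show ?thesis by (unfold slope_add slope_cmul slope_id[OF ne]) simp
qed

lemma inv_comp_DCR:
  fixes G1 G2 w :: "real \<Rightarrow> real"
  assumes d: "\<delta> > 0" and m: "m > 0" and M2: "M2 \<ge> 0"
    and cont: "continuous_on {0..\<delta>} G1" and G10: "G1 0 = 0"
    and sl1: "\<And>s t. 0 \<le> s \<Longrightarrow> s < t \<Longrightarrow> t \<le> \<delta> \<Longrightarrow> m \<le> slope G1 s t"
    and sl2: "\<And>s t. 0 \<le> s \<Longrightarrow> s < t \<Longrightarrow> t \<le> \<delta> \<Longrightarrow> \<bar>slope G2 s t\<bar> \<le> M2"
    and slw: "\<And>s t. 0 \<le> s \<Longrightarrow> s < t \<Longrightarrow> t \<le> \<delta> \<Longrightarrow> l \<le> slope w s t \<and> slope w s t \<le> l + m / 2"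
    and c1: "convex_on {0..\<delta>} (\<lambda>t. w t + G1 t)" and c2: "convex_on {0..\<delta>} (\<lambda>t. w t - G1 t)"
    and c3: "convex_on {0..\<delta>} (\<lambda>t. w t + G2 t)" and c4: "convex_on {0..\<delta>} (\<lambda>t. w t - G2 t)"
  shows "DCR_on {0..m*\<delta>} (\<lambda>x. G2 (invf G1 \<delta> x))"
proof -
  have sl1': "m * (t - s) \<le> G1 t - G1 s" if "0 \<le> s" "s < t" "t \<le> \<delta>" for s t
  proof -
    have "m * (t - s) \<le> slope G1 s t * (t - s)" using sl1[OF that] that by (simp add: mult_right_mono)
    thus ?thesis using slope_mult[of s t G1] that by (simp add: mult.commute)
  qed
  define \<psi> where "\<psi> = invf G1 \<delta>"
  note ip = invf_props[OF d m cont G10 sl1', folded \<psi>_def]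
  define b where "b = m * \<delta>"
  have b: "b \<ge> 0" unfolding b_def using m d by simp
  have mono: "\<psi> x1 < \<psi> x2" if "x1 \<in> {0..b}" "x2 \<in> {0..b}" "x1 < x2" for x1 x2
  proof (rule ccontr)
    assume "\<not> \<psi> x1 < \<psi> x2"
    hence "\<psi> x2 \<le> \<psi> x1" by simp
    moreover have "\<psi> x1 \<in> {0..\<delta>}" "\<psi> x2 \<in> {0..\<delta>}" "G1 (\<psi> x1) = x1" "G1 (\<psi> x2) = x2"
      using ip(1) that unfolding b_def by auto
    ultimately have "x2 \<le> x1"
    proof (cases "\<psi> x2 = \<psi> x1")
      case True thus ?thesis using \<open>G1 (\<psi> x1) = x1\<close> \<open>G1 (\<psi> x2) = x2\<close> by simp
    next
      case False
      hence lt: "\<psi> x2 < \<psi> x1" using \<open>\<psi> x2 \<le> \<psi> x1\<close> by simp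
      have "0 \<le> m * (\<psi> x1 - \<psi> x2)" using lt m by simp
      moreover have "m * (\<psi> x1 - \<psi> x2) \<le> G1 (\<psi> x1) - G1 (\<psi> x2)"
        using sl1'[OF _ lt] \<open>\<psi> x2 \<in> {0..\<delta>}\<close> \<open>\<psi> x1 \<in> {0..\<delta>}\<close> by auto
      ultimately show ?thesis using \<open>G1 (\<psi> x1) = x1\<close> \<open>G1 (\<psi> x2) = x2\<close> by simp
    qed
    thus False using that by simp
  qed
  define C where "C = 2 + 2 * M2 / m"
  have C0: "C \<ge> 0" unfolding C_def using M2 m by simp
  define Ph where "Ph t = (C/2) * w t + ((- (C*l/2)) * t + (1/2) * G2 t)" for t
  define Qh where "Qh t = (C/2) * w t + ((- (C*l/2)) * t + (-1/2) * G2 t)" for t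
  define P where "P x = Ph (\<psi> x)" for x
  define Q where "Q x = Qh (\<psi> x)" for x
  have slx: "slope P x1 x2 = ((C/2) * slope w (\<psi> x1) (\<psi> x2) - C*l/2 + (1/2) * slope G2 (\<psi> x1) (\<psi> x2)) / slope G1 (\<psi> x1) (\<psi> x2)
           \<and> slope Q x1 x2 = ((C/2) * slope w (\<psi> x1) (\<psi> x2) - C*l/2 + (-1/2) * slope G2 (\<psi> x1) (\<psi> x2)) / slope G1 (\<psi> x1) (\<psi> x2)"
    if "x1 \<in> {0..b}" "x2 \<in> {0..b}" "x1 < x2" for x1 x2
  proof -
    have ne: "\<psi> x1 \<noteq> \<psi> x2" using mono[OF that] by simp
    have g: "G1 (\<psi> x1) = x1" "G1 (\<psi> x2) = x2" using ip(1) that unfolding b_def by auto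
    show ?thesis
      unfolding P_def Q_def
      using slope_comp_inv[OF ne g(1)[symmetric] g(2)[symmetric], of "\<lambda>x. \<psi> x" Ph]
        slope_comp_inv[OF ne g(1)[symmetric] g(2)[symmetric], of "\<lambda>x. \<psi> x" Qh]
        slope_P[OF ne, of C w l "1/2" G2] slope_P[OF ne, of C w l "-1/2" G2]
      unfolding Ph_def Qh_def by metis
  qed
  have tI: "0 \<le> \<psi> x1 \<and> \<psi> x2 \<le> \<delta>" if "x1 \<in> {0..b}" "x2 \<in> {0..b}" for x1 x2
    using ip(1) that unfolding b_def by auto
  have three: "slope P x1 x2 \<le> slope P x2 x3 \<and> slope Q x1 x2 \<le> slope Q x2 x3"
    if x: "x1 \<in> {0..b}" "x3 \<in> {0..b}" "x1 < x2" "x2 < x3" for x1 x2 x3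
  proof -
    have x2: "x2 \<in> {0..b}" using x by auto
    define t1 t2 t3 where "t1 = \<psi> x1" and "t2 = \<psi> x2" and "t3 = \<psi> x3"
    have t: "t1 < t2" "t2 < t3" "0 \<le> t1" "t3 \<le> \<delta>"
      using mono[OF x(1) x2 x(3)] mono[OF x2 x(2) x(4)] tI[OF x(1) x(2)] unfolding t1_def t2_def t3_def by auto
    define a1 a2 b1 b2 w1 w2 where "a1 = slope G1 t1 t2" and "a2 = slope G1 t2 t3"
      and "b1 = slope G2 t1 t2" and "b2 = slope G2 t2 t3"
      and "w1 = slope w t1 t2 - l" and "w2 = slope w t2 t3 - l"
    have a: "m \<le> a1" "m \<le> a2" unfolding a1_def a2_def using sl1 t by auto
    have wb: "0 \<le> w1" "w1 \<le> m/2" unfolding w1_def using slw[of t1 t2] t by auto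
    have bb: "\<bar>b1\<bar> \<le> M2" unfolding b1_def using sl2[of t1 t2] t by auto
    have I: "t1 \<in> {0..\<delta>}" "t3 \<in> {0..\<delta>}" using t by auto
    have "slope (\<lambda>t. w t + G1 t) t1 t2 \<le> slope (\<lambda>t. w t + G1 t) t2 t3"
         "slope (\<lambda>t. w t - G1 t) t1 t2 \<le> slope (\<lambda>t. w t - G1 t) t2 t3"
         "slope (\<lambda>t. w t + G2 t) t1 t2 \<le> slope (\<lambda>t. w t + G2 t) t2 t3"
         "slope (\<lambda>t. w t - G2 t) t1 t2 \<le> slope (\<lambda>t. w t - G2 t) t2 t3"
      using convex_slope3(1)[OF c1 I t(1,2)] convex_slope3(1)[OF c2 I t(1,2)]
        convex_slope3(1)[OF c3 I t(1,2)] convex_slope3(1)[OF c4 I t(1,2)] by auto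
    hence ca: "\<bar>a2 - a1\<bar> \<le> w2 - w1" and cb: "\<bar>b2 - b1\<bar> \<le> w2 - w1"
      unfolding slope_add slope_diff a1_def a2_def b1_def b2_def w1_def w2_def by auto
    have K: "\<bar>b2 / a2 - b1 / a1\<bar> \<le> C * w2 / a2 - C * w1 / a1"
      by (rule key_ineq[OF m a wb bb ca cb C_def])
    have n0: "a1 \<noteq> 0" "a2 \<noteq> 0" using a m by auto
    have e1: "slope P x1 x2 = (C * w1 / a1 + b1 / a1) / 2" "slope Q x1 x2 = (C * w1 / a1 - b1 / a1) / 2"
      using e_form(1)[OF n0(1), of "slope P x1 x2" C "slope w t1 t2" l b1 "slope Q x1 x2"]
        slx[OF x(1) x2 x(3), folded t1_def t2_def, folded a1_def b1_def] unfolding w1_def by auto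
    have e2: "slope P x2 x3 = (C * w2 / a2 + b2 / a2) / 2" "slope Q x2 x3 = (C * w2 / a2 - b2 / a2) / 2"
      using e_form(1)[OF n0(2), of "slope P x2 x3" C "slope w t2 t3" l b2 "slope Q x2 x3"]
        slx[OF x2 x(2) x(4), folded t3_def t2_def, folded a2_def b2_def] unfolding w2_def by auto
    show ?thesis unfolding e1 e2 by (rule half_pm[OF K])
  qed
  have cP: "convex_on {0..b} P" and cQ: "convex_on {0..b} Q"
    by (rule slope3_convex; use three in auto)+
  define K where "K = C + M2 / m"
  have lipb: "\<bar>slope P x1 x2\<bar> \<le> K \<and> \<bar>slope Q x1 x2\<bar> \<le> K"
    if x: "x1 \<in> {0..b}" "x2 \<in> {0..b}" "x1 < x2" for x1 x2
  proof -
    define t1 t2 where "t1 = \<psi> x1" and "t2 = \<psi> x2"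
    have t: "t1 < t2" "0 \<le> t1" "t2 \<le> \<delta>"
      using mono[OF x] tI[OF x(1) x(2)] unfolding t1_def t2_def by auto
    define a1 b1 w1 where "a1 = slope G1 t1 t2" and "b1 = slope G2 t1 t2" and "w1 = slope w t1 t2 - l"
    have a: "m \<le> a1" unfolding a1_def using sl1 t by auto
    have wb: "0 \<le> w1" "w1 \<le> m/2" unfolding w1_def using slw[of t1 t2] t by auto
    have bb: "\<bar>b1\<bar> \<le> M2" unfolding b1_def using sl2[of t1 t2] t by auto
    have n0: "a1 \<noteq> 0" using a m by auto
    have e1: "slope P x1 x2 = (C * w1 + b1) / (2 * a1)" "slope Q x1 x2 = (C * w1 - b1) / (2 * a1)"
      using e_form(2)[OF n0(1), of "slope P x1 x2" C "slope w t1 t2" l b1 "slope Q x1 x2"]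
        slx[OF x, folded t1_def t2_def, folded a1_def b1_def] unfolding w1_def by auto
    have cw: "C * w1 \<le> C * (m/2)" "0 \<le> C * w1"
      using mult_left_mono[OF wb(2) C0] wb(1) C0 by simp_all
    have "C * (m/2) \<le> C * m" using C0 m by (simp add: mult_left_mono)
    hence n: "\<bar>C * w1 + b1\<bar> \<le> C * m + M2" "\<bar>C * w1 - b1\<bar> \<le> C * m + M2"
      using cw bb unfolding abs_le_iff by linarith+
    have "(C * m + M2) / (2 * a1) \<le> (C * m + M2) / m"
      using a m C0 M2 by (intro divide_left_mono) (auto intro: add_nonneg_nonneg)
    also have "\<dots> = C + M2 / m" using m by (simp add: field_simps)
    finally have F: "(C * m + M2) / (2 * a1) \<le> K" unfolding K_def .
    have pa: "2 * a1 > 0" using a m by simp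
    have "\<bar>C * w1 + b1\<bar> / (2 * a1) \<le> (C * m + M2) / (2 * a1)"
         "\<bar>C * w1 - b1\<bar> / (2 * a1) \<le> (C * m + M2) / (2 * a1)"
      using n pa by (simp_all add: divide_right_mono)
    thus ?thesis unfolding e1 using F pa by (simp add: abs_div)
  qed
  have K0: "K \<ge> 0" unfolding K_def using C0 M2 m by simp
  show ?thesis
    unfolding b_def[symmetric] \<psi>_def[symmetric]
  proof (rule DCR_from_parts[OF b cP cQ K0])
    show "\<bar>P x - P y\<bar> \<le> K * \<bar>x - y\<bar>" if "x \<in> {0..b}" "y \<in> {0..b}" for x y
      using slope_lip[of "{0..b}" P K] lipb that by blast
    show "\<bar>Q x - Q y\<bar> \<le> K * \<bar>x - y\<bar>" if "x \<in> {0..b}" "y \<in> {0..b}" for x y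
      using slope_lip[of "{0..b}" Q K] lipb that by blast
    show "G2 (\<psi> x) = P x - Q x" for x unfolding P_def Q_def Ph_def Qh_def by (simp add: algebra_simps)
  qed
qed

lemma comp2_convex:
  fixes u :: "real \<times> real \<Rightarrow> real" and p q :: "real \<Rightarrow> real"
  assumes K: "convex K" and cu: "convex_on K u" and L: "L \<ge> 0"
    and lip: "\<And>t y1 y2. (t, y1) \<in> K \<Longrightarrow> (t, y2) \<in> K \<Longrightarrow> \<bar>u (t, y1) - u (t, y2)\<bar> \<le> L * \<bar>y1 - y2\<bar>"
    and I: "convex I" and cp: "convex_on I p" and cq: "convex_on I q"
    and inK: "\<And>t. t \<in> I \<Longrightarrow> (t, p t - q t) \<in> K"
  shows "convex_on I (\<lambda>t. u (t, p t - q t) + L * (p t + q t))"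
proof (rule convex_onI[OF _ I])
  fix s x y :: real assume s: "0 < s" "s < 1" "x \<in> I" "y \<in> I"
  define z where "z = (1 - s) * x + s * y"
  have zI: "z \<in> I" using convexD[OF I s(3,4), of "1 - s" s] s unfolding z_def by simp
  define Y where "Y = (1 - s) * (p x - q x) + s * (p y - q y)"
  have pr: "(z, Y) = (1 - s) *\<^sub>R (x, p x - q x) + s *\<^sub>R (y, p y - q y)"
    unfolding z_def Y_def by simp
  have zY: "(z, Y) \<in> K" unfolding pr using convexD[OF K inK[OF s(3)] inK[OF s(4)], of "1 - s" s] s by simp
  have u1: "u (z, Y) \<le> (1 - s) * u (x, p x - q x) + s * u (y, p y - q y)"
    unfolding pr using convex_onD[OF cu, of s "(x, p x - q x)" "(y, p y - q y)"] s inK by simp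
  define P where "P = (1 - s) * p x + s * p y - p z"
  define Q where "Q = (1 - s) * q x + s * q y - q z"
  have P: "P \<ge> 0" unfolding P_def z_def using convex_onD[OF cp, of s x y] s by simp
  have Q: "Q \<ge> 0" unfolding Q_def z_def using convex_onD[OF cq, of s x y] s by simp
  have d: "(p z - q z) - Y = Q - P" unfolding P_def Q_def Y_def by (simp add: algebra_simps)
  have "\<bar>u (z, p z - q z) - u (z, Y)\<bar> \<le> L * \<bar>(p z - q z) - Y\<bar>" by (rule lip[OF inK[OF zI] zY])
  also have "\<dots> \<le> L * (P + Q)" unfolding d using P Q L by (intro mult_left_mono) auto
  finally have u2: "u (z, p z - q z) \<le> u (z, Y) + L * (P + Q)" by linarith
  have e: "L * (P + Q) + L * (p z + q z) = L * ((1 - s) * (p x + q x) + s * (p y + q y))"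
    unfolding P_def Q_def by (simp add: algebra_simps)
  have e2: "(1 - s) * (u (x, p x - q x) + L * (p x + q x)) + s * (u (y, p y - q y) + L * (p y + q y))
     = (1 - s) * u (x, p x - q x) + s * u (y, p y - q y) + L * ((1 - s) * (p x + q x) + s * (p y + q y))"
    by (simp add: algebra_simps)
  have "u (z, p z - q z) + L * (p z + q z) \<le>
        (1 - s) * (u (x, p x - q x) + L * (p x + q x)) + s * (u (y, p y - q y) + L * (p y + q y))"
    using u1 u2 e e2 by linarith
  thus "u ((1 - s) *\<^sub>R x + s *\<^sub>R y, p ((1 - s) *\<^sub>R x + s *\<^sub>R y) - q ((1 - s) *\<^sub>R x + s *\<^sub>R y)) +
        L * (p ((1 - s) *\<^sub>R x + s *\<^sub>R y) + q ((1 - s) *\<^sub>R x + s *\<^sub>R y))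
        \<le> (1 - s) * (u (x, p x - q x) + L * (p x + q x)) + s * (u (y, p y - q y) + L * (p y + q y))"
    unfolding z_def by simp
qed

lemma section_mem:
  fixes U :: "(real \<times> real) set"
  assumes U: "convex U" and a: "(t, a) \<in> U" and c: "(t, c) \<in> U" and x: "a \<le> x" "x \<le> c"
  shows "(t, x) \<in> U"
proof (cases "a = c")
  case True thus ?thesis using a x by simp
next
  case False
  hence ac: "a < c" using x by simp
  define l where "l = (x - a) / (c - a)"
  have l: "0 \<le> l" "l \<le> 1" unfolding l_def using ac x by (auto simp: divide_simps)
  have ne: "c - a \<noteq> 0" using ac by simp
  have l1: "l * (c - a) = x - a" unfolding l_def using ne by simp
  have "(1 - l) * a + l * c = a + l * (c - a)" by (simp add: algebra_simps)
  hence e1: "(1 - l) * a + l * c = x" using l1 by simp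
  have e2: "(1 - l) * t + l * t = t" by (simp add: algebra_simps)
  have "(t, x) = (1 - l) *\<^sub>R (t, a) + l *\<^sub>R (t, c)" using e1 e2 by simp
  thus ?thesis using convexD[OF U a c, of "1 - l" l] l by simp
qed

lemma section_convex:
  fixes U :: "(real \<times> real) set" and u :: "real \<times> real \<Rightarrow> real"
  assumes U: "convex_on U u" and a: "(t, a) \<in> U" and c: "(t, c) \<in> U"
  shows "convex_on {a..c} (\<lambda>y. u (t, y))"
proof (rule convex_onI)
  have cU: "convex U" using U convex_on_imp_convex by blast
  fix s x y :: real assume s: "0 < s" "s < 1" "x \<in> {a..c}" "y \<in> {a..c}"
  have xy: "(t, x) \<in> U" "(t, y) \<in> U" using section_mem[OF cU a c] s by auto
  have "(t, (1 - s) *\<^sub>R x + s *\<^sub>R y) = (1 - s) *\<^sub>R (t, x) + s *\<^sub>R (t, y)" by (simp add: algebra_simps)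
  thus "u (t, (1 - s) *\<^sub>R x + s *\<^sub>R y) \<le> (1 - s) * u (t, x) + s * u (t, y)"
    using convex_onD[OF U, of s "(t, x)" "(t, y)"] s xy by simp
qed simp

lemma cball2:
  fixes t y \<rho> :: real
  assumes "(t, y) \<in> cball 0 \<rho>" "\<bar>e\<bar> \<le> \<rho>"
  shows "(t, y + e) \<in> cball 0 (2 * \<rho>)"
proof -
  have "norm (t, y + e) = norm ((t, y) + (0, e))" by simp
  also have "\<dots> \<le> norm (t, y) + norm ((0::real), e)" by (rule norm_triangle_ineq)
  also have "norm ((0::real), e) = \<bar>e\<bar>" by (simp add: norm_Pair)
  finally show ?thesis using assms unfolding mem_cball_0 by linarith
qed

lemma vert_lip:
  fixes u :: "real \<times> real \<Rightarrow> real"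
  assumes U: "open U" and cu: "convex_on U u" and r: "\<rho> > 0" and sub: "cball 0 (2 * \<rho>) \<subseteq> U"
  shows "\<exists>L\<ge>0. \<forall>t y1 y2. (t, y1) \<in> cball 0 \<rho> \<longrightarrow> (t, y2) \<in> cball 0 \<rho> \<longrightarrow>
           \<bar>u (t, y1) - u (t, y2)\<bar> \<le> L * \<bar>y1 - y2\<bar>"
proof -
  have "continuous_on U u" by (rule convex_on_continuous[OF U cu])
  hence "continuous_on (cball 0 (2 * \<rho>)) u" using sub continuous_on_subset by blast
  then obtain M where M: "M \<ge> 0" "\<And>z. z \<in> cball 0 (2 * \<rho>) \<Longrightarrow> norm (u z) \<le> M"
    using continuous_on_compact_bound[OF compact_cball] by blast
  define L where "L = 2 * M / \<rho>"
  have L0: "L \<ge> 0" unfolding L_def using M r by simp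
  have bnd: "\<bar>slope (\<lambda>y. u (t, y)) y1 y2\<bar> \<le> L"
    if y: "y1 \<in> {y. (t, y) \<in> cball 0 \<rho>}" "y2 \<in> {y. (t, y) \<in> cball 0 \<rho>}" "y1 < y2" for t y1 y2
  proof -
    have in1: "(t, y1 + (-\<rho>)) \<in> cball 0 (2 * \<rho>)" "(t, y2 + \<rho>) \<in> cball 0 (2 * \<rho>)"
      using cball2[of t y1 \<rho> "-\<rho>"] cball2[of t y2 \<rho> \<rho>] y r by auto
    have in2: "(t, y1) \<in> cball 0 (2 * \<rho>)" "(t, y2) \<in> cball 0 (2 * \<rho>)"
      using y r by (auto simp: dist_norm)
    have "(t, y1 - \<rho>) \<in> U" "(t, y2 + \<rho>) \<in> U" using in1 sub by auto
    hence cv: "convex_on {y1 - \<rho>..y2 + \<rho>} (\<lambda>y. u (t, y))"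
      using section_convex[OF cu] by blast
    have s1: "slope (\<lambda>y. u (t, y)) (y1 - \<rho>) y1 \<le> slope (\<lambda>y. u (t, y)) y1 y2"
      using convex_slope3(1)[OF cv, of "y1 - \<rho>" y2 y1] r y by auto
    have s2: "slope (\<lambda>y. u (t, y)) y1 y2 \<le> slope (\<lambda>y. u (t, y)) y2 (y2 + \<rho>)"
      using convex_slope3(1)[OF cv, of y1 "y2 + \<rho>" y2] r y by auto
    have b1: "\<bar>u (t, y1 - \<rho>)\<bar> \<le> M" "\<bar>u (t, y1)\<bar> \<le> M" "\<bar>u (t, y2)\<bar> \<le> M" "\<bar>u (t, y2 + \<rho>)\<bar> \<le> M"
      using M(2)[OF in1(1)] M(2)[OF in1(2)] M(2)[OF in2(1)] M(2)[OF in2(2)] by auto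
    have "slope (\<lambda>y. u (t, y)) (y1 - \<rho>) y1 = (u (t, y1) - u (t, y1 - \<rho>)) / \<rho>" unfolding slope_def by simp
    also have "\<dots> \<ge> - L" unfolding L_def using b1 r by (simp add: divide_simps)
    finally have l1: "- L \<le> slope (\<lambda>y. u (t, y)) y1 y2" using s1 by linarith
    have "slope (\<lambda>y. u (t, y)) y2 (y2 + \<rho>) = (u (t, y2 + \<rho>) - u (t, y2)) / \<rho>" unfolding slope_def by simp
    also have "\<dots> \<le> L" unfolding L_def using b1 r by (simp add: divide_simps)
    finally have l2: "slope (\<lambda>y. u (t, y)) y1 y2 \<le> L" using s2 by linarith
    show ?thesis using l1 l2 by simp
  qed
  show ?thesis
  proof (intro exI[of _ L] conjI allI impI L0)
    fix t y1 y2 assume "(t, y1) \<in> cball (0::real \<times> real) \<rho>" "(t, y2) \<in> cball (0::real \<times> real) \<rho>"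
    thus "\<bar>u (t, y1) - u (t, y2)\<bar> \<le> L * \<bar>y1 - y2\<bar>"
      using slope_lip[of "{y. (t, y) \<in> cball 0 \<rho>}" "\<lambda>y. u (t, y)" L] bnd by blast
  qed
qed

lemma convex_on_cong':
  assumes "convex_on S f" "\<And>x. x \<in> S \<Longrightarrow> f x = g x"
  shows "convex_on S g"
  using assms unfolding convex_on_def
  by (metis (no_types, lifting) convexD)

lemma norm_pair_le: "norm ((a::real), (b::real)) \<le> \<bar>a\<bar> + \<bar>b\<bar>"
proof -
  have "norm (a, b) = norm ((a, 0) + (0, b))" by simp
  also have "\<dots> \<le> norm (a, 0::real) + norm (0::real, b)" by (rule norm_triangle_ineq)
  finally show ?thesis by (simp add: norm_Pair)
qed

lemma right_small:
  fixes f :: "real \<Rightarrow> real"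
  assumes "(f \<longlongrightarrow> L) (at_right 0)" "e > 0"
  shows "\<exists>\<tau>>0. \<forall>t. 0 < t \<longrightarrow> t < \<tau> \<longrightarrow> \<bar>f t - L\<bar> < e"
proof -
  have "eventually (\<lambda>t. dist (f t) L < e) (at_right 0)" by (rule tendstoD[OF assms])
  thus ?thesis unfolding eventually_at_right_field dist_real_def by auto
qed

lemma right_smallI:
  fixes f :: "real \<Rightarrow> real"
  assumes "\<And>e. e > 0 \<Longrightarrow> \<exists>\<tau>>0. \<forall>t. 0 < t \<longrightarrow> t < \<tau> \<longrightarrow> \<bar>f t - L\<bar> < e"
  shows "(f \<longlongrightarrow> L) (at_right 0)"
proof (rule tendstoI)
  fix e :: real assume "e > 0"
  from assms[OF this] obtain \<tau> where "\<tau> > 0" "\<forall>t. 0 < t \<longrightarrow> t < \<tau> \<longrightarrow> \<bar>f t - L\<bar> < e" by auto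
  thus "eventually (\<lambda>t. dist (f t) L < e) (at_right 0)"
    unfolding eventually_at_right_field dist_real_def by auto
qed

lemma per_curve:
  fixes F :: "real \<times> real \<Rightarrow> real \<times> real" and u1 v1 u2 v2 :: "real \<times> real \<Rightarrow> real"
    and g :: "real \<Rightarrow> real"
  assumes U0: "open U0" and r: "\<rho> > 0" and sub: "cball 0 (2 * \<rho>) \<subseteq> U0"
    and cu1: "convex_on U0 u1" and cv1: "convex_on U0 v1" and cu2: "convex_on U0 u2" and cv2: "convex_on U0 v2"
    and Feq: "\<And>z. z \<in> U0 \<Longrightarrow> F z = (u1 z - v1 z, u2 z - v2 z)"
    and Fcont: "continuous_on U0 F"
    and L: "L \<ge> 0"
    and lip: "\<And>h t y1 y2. h \<in> {u1, v1, u2, v2} \<Longrightarrow> (t, y1) \<in> cball 0 \<rho> \<Longrightarrow> (t, y2) \<in> cball 0 \<rho> \<Longrightarrow>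
                \<bar>h (t, y1) - h (t, y2)\<bar> \<le> L * \<bar>y1 - y2\<bar>"
    and c: "c > 0" and F0: "F (0, 0) = (0, 0)"
    and d1: "((\<lambda>t. fst (F (t, 0)) / t) \<longlongrightarrow> c) (at_right 0)"
    and d2: "((\<lambda>t. snd (F (t, 0)) / t) \<longlongrightarrow> 0) (at_right 0)"
    and g: "DC_on UNIV g" and g0: "g 0 = 0" and gd: "((\<lambda>t. g t / t) \<longlongrightarrow> 0) (at_right 0)"
  shows "\<exists>\<delta>>0. (\<forall>t\<in>{0..\<delta>}. (t, g t) \<in> cball 0 \<rho>) \<and>
     (\<forall>s t. 0 \<le> s \<longrightarrow> s < t \<longrightarrow> t \<le> \<delta> \<longrightarrow> c/2 * (t - s) \<le> fst (F (t, g t)) - fst (F (s, g s))) \<and>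
     DCR_on {0..c/2*\<delta>} (\<lambda>x. snd (F (invf (\<lambda>t. fst (F (t, g t))) \<delta> x, g (invf (\<lambda>t. fst (F (t, g t))) \<delta> x)))) \<and>
     has_onesided_dirderiv (\<lambda>x. snd (F (invf (\<lambda>t. fst (F (t, g t))) \<delta> x, g (invf (\<lambda>t. fst (F (t, g t))) \<delta> x)))) 0 1 0"
proof -
  obtain p q where cp: "convex_on UNIV p" and cq: "convex_on UNIV q" and gpq: "\<And>x. g x = p x - q x"
    using g unfolding DC_on_def by blast
  have gcont: "continuous_on UNIV g"
  proof -
    have "continuous_on UNIV (\<lambda>x. p x - q x)"
      using convex_on_continuous[OF open_UNIV cp] convex_on_continuous[OF open_UNIV cq]
      by (intro continuous_on_diff)
    thus ?thesis using gpq by simp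
  qed
  have "\<exists>d>0. \<forall>x'\<in>UNIV. dist x' 0 < d \<longrightarrow> dist (g x') (g 0) < \<rho>/2"
    using continuous_on_iff[THEN iffD1, OF gcont, rule_format, of 0 "\<rho>/2"] r by auto
  then obtain \<eta>0 where \<eta>0: "\<eta>0 > 0" "\<And>t. \<bar>t\<bar> < \<eta>0 \<Longrightarrow> \<bar>g t\<bar> < \<rho>/2"
    using g0 unfolding dist_real_def by auto
  define \<eta> where "\<eta> = min (\<eta>0/2) (\<rho>/2)"
  have \<eta>: "\<eta> > 0" "\<eta> \<le> \<rho>/2" unfolding \<eta>_def using \<eta>0 r by auto
  define I where "I = {-\<eta>..\<eta>}"
  define K where "K = cball (0::real \<times> real) \<rho>"
  have KU: "K \<subseteq> U0" unfolding K_def using sub r using subset_cball[of \<rho> "2 * \<rho>" 0] by auto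
  have inK: "(t, g t) \<in> K" if "t \<in> I" for t
  proof -
    have "\<bar>t\<bar> < \<eta>0" using that \<eta>0 unfolding I_def \<eta>_def by auto
    hence "\<bar>g t\<bar> < \<rho>/2" by (rule \<eta>0(2))
    moreover have "\<bar>t\<bar> \<le> \<rho>/2" using that \<eta> unfolding I_def by auto
    ultimately show ?thesis unfolding K_def mem_cball_0 using norm_pair_le[of t "g t"] by linarith
  qed
  have inK0: "(t, 0) \<in> K" if "t \<in> I" for t
    using that \<eta> unfolding I_def K_def mem_cball_0 by (auto simp: norm_Pair)
  have cI: "convex I" unfolding I_def by simp
  have cK: "convex K" unfolding K_def by simp
  have cpI: "convex_on I p" "convex_on I q" using cp cq cI convex_on_subset by blast+
  have inK': "(t, p t - q t) \<in> K" if "t \<in> I" for t using inK[OF that] gpq by simp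
  have lipK: "\<And>t y1 y2. (t, y1) \<in> K \<Longrightarrow> (t, y2) \<in> K \<Longrightarrow> \<bar>h (t, y1) - h (t, y2)\<bar> \<le> L * \<bar>y1 - y2\<bar>"
    if "h \<in> {u1, v1, u2, v2}" for h using lip[OF that] unfolding K_def by blast
  define A1 where "A1 t = u1 (t, p t - q t) + L * (p t + q t)" for t
  define B1 where "B1 t = v1 (t, p t - q t) + L * (p t + q t)" for t
  define A2 where "A2 t = u2 (t, p t - q t) + L * (p t + q t)" for t
  define B2 where "B2 t = v2 (t, p t - q t) + L * (p t + q t)" for t
  have cA1: "convex_on I A1" unfolding A1_def
    by (rule comp2_convex[OF cK convex_on_subset[OF cu1 KU cK] L lipK cI cpI inK']) auto
  have cB1: "convex_on I B1" unfolding B1_def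
    by (rule comp2_convex[OF cK convex_on_subset[OF cv1 KU cK] L lipK cI cpI inK']) auto
  have cA2: "convex_on I A2" unfolding A2_def
    by (rule comp2_convex[OF cK convex_on_subset[OF cu2 KU cK] L lipK cI cpI inK']) auto
  have cB2: "convex_on I B2" unfolding B2_def
    by (rule comp2_convex[OF cK convex_on_subset[OF cv2 KU cK] L lipK cI cpI inK']) auto
  define G1 where "G1 t = fst (F (t, g t))" for t
  define G2 where "G2 t = snd (F (t, g t))" for t
  have GA: "G1 t = A1 t - B1 t \<and> G2 t = A2 t - B2 t" if "t \<in> I" for t
    using Feq[of "(t, g t)"] inK[OF that] KU gpq unfolding G1_def G2_def A1_def B1_def A2_def B2_def by auto
  define \<epsilon> where "\<epsilon> = c / 16"
  have \<epsilon>: "\<epsilon> > 0" unfolding \<epsilon>_def using c by simp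
  obtain \<delta>1 l1 where D1: "0 < \<delta>1" "\<delta>1 \<le> \<eta>"
      "\<And>s t. 0 \<le> s \<Longrightarrow> s < t \<Longrightarrow> t \<le> \<delta>1 \<Longrightarrow> l1 \<le> slope A1 s t \<and> slope A1 s t \<le> l1 + \<epsilon>"
    using slope_localize[OF \<eta>(1) cA1[unfolded I_def] \<epsilon>] by blast
  obtain \<delta>2 l2 where D2: "0 < \<delta>2" "\<delta>2 \<le> \<eta>"
      "\<And>s t. 0 \<le> s \<Longrightarrow> s < t \<Longrightarrow> t \<le> \<delta>2 \<Longrightarrow> l2 \<le> slope B1 s t \<and> slope B1 s t \<le> l2 + \<epsilon>"
    using slope_localize[OF \<eta>(1) cB1[unfolded I_def] \<epsilon>] by blast
  obtain \<delta>3 l3 where D3: "0 < \<delta>3" "\<delta>3 \<le> \<eta>"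
      "\<And>s t. 0 \<le> s \<Longrightarrow> s < t \<Longrightarrow> t \<le> \<delta>3 \<Longrightarrow> l3 \<le> slope A2 s t \<and> slope A2 s t \<le> l3 + \<epsilon>"
    using slope_localize[OF \<eta>(1) cA2[unfolded I_def] \<epsilon>] by blast
  obtain \<delta>4 l4 where D4: "0 < \<delta>4" "\<delta>4 \<le> \<eta>"
      "\<And>s t. 0 \<le> s \<Longrightarrow> s < t \<Longrightarrow> t \<le> \<delta>4 \<Longrightarrow> l4 \<le> slope B2 s t \<and> slope B2 s t \<le> l4 + \<epsilon>"
    using slope_localize[OF \<eta>(1) cB2[unfolded I_def] \<epsilon>] by blast
  define \<delta> where "\<delta> = min (min \<delta>1 \<delta>2) (min \<delta>3 \<delta>4)"
  have \<delta>: "0 < \<delta>" "\<delta> \<le> \<eta>" "\<delta> \<le> \<delta>1" "\<delta> \<le> \<delta>2" "\<delta> \<le> \<delta>3" "\<delta> \<le> \<delta>4"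
    unfolding \<delta>_def using D1 D2 D3 D4 by auto
  have dI: "{0..\<delta>} \<subseteq> I" unfolding I_def using \<delta> \<eta> by auto
  have SA: "l1 \<le> slope A1 s t \<and> slope A1 s t \<le> l1 + \<epsilon> \<and> l2 \<le> slope B1 s t \<and> slope B1 s t \<le> l2 + \<epsilon> \<and>
            l3 \<le> slope A2 s t \<and> slope A2 s t \<le> l3 + \<epsilon> \<and> l4 \<le> slope B2 s t \<and> slope B2 s t \<le> l4 + \<epsilon>"
    if "0 \<le> s" "s < t" "t \<le> \<delta>" for s t
    using D1(3)[of s t] D2(3)[of s t] D3(3)[of s t] D4(3)[of s t] that \<delta> by auto
  have SG: "slope G1 s t = slope A1 s t - slope B1 s t \<and> slope G2 s t = slope A2 s t - slope B2 s t"
    if "0 \<le> s" "s < t" "t \<le> \<delta>" for s t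
  proof -
    have "s \<in> I" "t \<in> I" using that dI by auto
    thus ?thesis using GA unfolding slope_def by (simp add: diff_divide_distrib[symmetric] algebra_simps)
  qed
  have G10: "G1 0 = 0" and G20: "G2 0 = 0" unfolding G1_def G2_def using g0 F0 by simp_all
  have near: "\<bar>G1 t / t - fst (F (t, 0)) / t\<bar> \<le> 2 * L * \<bar>g t / t\<bar> \<and>
              \<bar>G2 t / t - snd (F (t, 0)) / t\<bar> \<le> 2 * L * \<bar>g t / t\<bar>" if t: "0 < t" "t < \<eta>" for t
  proof -
    have tI: "t \<in> I" using t unfolding I_def by auto
    have P1: "(t, g t) \<in> K" "(t, 0) \<in> K" using inK[OF tI] inK0[OF tI] by auto
    have F1: "F (t, g t) = (u1 (t, g t) - v1 (t, g t), u2 (t, g t) - v2 (t, g t))"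
         and F2: "F (t, 0) = (u1 (t, 0) - v1 (t, 0), u2 (t, 0) - v2 (t, 0))"
      using Feq P1 KU by auto
    have l: "\<bar>h (t, g t) - h (t, 0)\<bar> \<le> L * \<bar>g t\<bar>" if "h \<in> {u1, v1, u2, v2}" for h
      using lipK[OF that P1] by simp
    have e1: "\<bar>G1 t - fst (F (t, 0))\<bar> \<le> 2 * L * \<bar>g t\<bar>"
      using l[of u1] l[of v1] unfolding G1_def F1 F2 by auto
    have e2: "\<bar>G2 t - snd (F (t, 0))\<bar> \<le> 2 * L * \<bar>g t\<bar>"
      using l[of u2] l[of v2] unfolding G2_def F1 F2 by auto
    have q1: "\<bar>G1 t / t - fst (F (t, 0)) / t\<bar> = \<bar>G1 t - fst (F (t, 0))\<bar> / t"
      and q2: "\<bar>G2 t / t - snd (F (t, 0)) / t\<bar> = \<bar>G2 t - snd (F (t, 0))\<bar> / t"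
      and q3: "2 * L * \<bar>g t / t\<bar> = 2 * L * \<bar>g t\<bar> / t"
      using t by (simp_all add: diff_divide_distrib[symmetric] abs_div)
    show ?thesis unfolding q1 q2 q3 using e1 e2 t by (simp add: divide_right_mono)
  qed
  have ev: "eventually (\<lambda>t. 0 < t \<and> t < \<eta>) (at_right (0::real))"
    unfolding eventually_at_right_field using \<eta> by auto
  have gz: "((\<lambda>t. 2 * L * \<bar>g t / t\<bar>) \<longlongrightarrow> 0) (at_right 0)"
    using tendsto_mult[OF tendsto_const[of "2 * L"] tendsto_rabs_zero[OF gd]] by simp
  have evn: "eventually (\<lambda>t. \<bar>G1 t / t - fst (F (t, 0)) / t\<bar> \<le> 2 * L * \<bar>g t / t\<bar> \<and>
              \<bar>G2 t / t - snd (F (t, 0)) / t\<bar> \<le> 2 * L * \<bar>g t / t\<bar>) (at_right 0)"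
    using ev by (rule eventually_mono) (use near in blast)
  have z1: "((\<lambda>t. G1 t / t - fst (F (t, 0)) / t) \<longlongrightarrow> 0) (at_right 0)"
    by (rule Lim_null_comparison[OF eventually_mono[OF evn] gz]) simp
  have z2: "((\<lambda>t. G2 t / t - snd (F (t, 0)) / t) \<longlongrightarrow> 0) (at_right 0)"
    by (rule Lim_null_comparison[OF eventually_mono[OF evn] gz]) simp
  have lim1: "((\<lambda>t. G1 t / t) \<longlongrightarrow> c) (at_right 0)"
    using tendsto_add[OF z1 d1] by simp
  have lim2: "((\<lambda>t. G2 t / t) \<longlongrightarrow> 0) (at_right 0)"
    using tendsto_add[OF z2 d2] by simp
  obtain \<tau>1 where \<tau>1: "\<tau>1 > 0" "\<And>t. 0 < t \<Longrightarrow> t < \<tau>1 \<Longrightarrow> \<bar>G1 t / t - c\<bar> < \<epsilon>"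
    using right_small[OF lim1 \<epsilon>] by blast
  obtain \<tau>2 where \<tau>2: "\<tau>2 > 0" "\<And>t. 0 < t \<Longrightarrow> t < \<tau>2 \<Longrightarrow> \<bar>G2 t / t - 0\<bar> < \<epsilon>"
    using right_small[OF lim2 \<epsilon>] by blast
  define s0 where "s0 = min (min \<tau>1 \<tau>2) \<delta> / 2"
  have s0: "0 < s0" "s0 < \<tau>1" "s0 < \<tau>2" "s0 \<le> \<delta>" unfolding s0_def using \<tau>1 \<tau>2 \<delta> by auto
  have sl0: "slope G1 0 s0 = G1 s0 / s0" "slope G2 0 s0 = G2 s0 / s0" unfolding slope_def using G10 G20 by simp_all
  have dc1: "\<bar>(l1 - l2) - c\<bar> < 2 * \<epsilon>"
    using SA[of 0 s0] SG[of 0 s0] s0 \<tau>1(2)[of s0] unfolding sl0 by (auto simp: abs_less_iff)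
  have dc2: "\<bar>l3 - l4\<bar> < 2 * \<epsilon>"
    using SA[of 0 s0] SG[of 0 s0] s0 \<tau>2(2)[of s0] unfolding sl0 by (auto simp: abs_less_iff)
  have slG1: "c/2 \<le> slope G1 s t" if "0 \<le> s" "s < t" "t \<le> \<delta>" for s t
    using SA[OF that] SG[OF that] dc1[unfolded abs_less_iff] c unfolding \<epsilon>_def by auto
  have slG2: "\<bar>slope G2 s t\<bar> \<le> 3 * \<epsilon>" if "0 \<le> s" "s < t" "t \<le> \<delta>" for s t
    using SA[OF that] SG[OF that] dc2[unfolded abs_less_iff] unfolding abs_le_iff by auto
  define w where "w t = A1 t + B1 t + (A2 t + B2 t)" for t
  have slw: "l1 + l2 + (l3 + l4) \<le> slope w s t \<and> slope w s t \<le> l1 + l2 + (l3 + l4) + c/2/2"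
    if "0 \<le> s" "s < t" "t \<le> \<delta>" for s t
  proof -
    have "slope w s t = slope A1 s t + slope B1 s t + (slope A2 s t + slope B2 s t)"
      unfolding w_def slope_add by simp
    thus ?thesis using SA[OF that] unfolding \<epsilon>_def by auto
  qed
  have cvx: "convex_on {0..\<delta>} (\<lambda>t. w t + G1 t)" "convex_on {0..\<delta>} (\<lambda>t. w t - G1 t)"
            "convex_on {0..\<delta>} (\<lambda>t. w t + G2 t)" "convex_on {0..\<delta>} (\<lambda>t. w t - G2 t)"
  proof -
    have c0: "convex {0..\<delta>}" by simp
    have a: "convex_on {0..\<delta>} A1" "convex_on {0..\<delta>} B1" "convex_on {0..\<delta>} A2" "convex_on {0..\<delta>} B2"
      using convex_on_subset[OF cA1 dI c0] convex_on_subset[OF cB1 dI c0]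
        convex_on_subset[OF cA2 dI c0] convex_on_subset[OF cB2 dI c0] by auto
    have e: "\<And>t. t \<in> {0..\<delta>} \<Longrightarrow> G1 t = A1 t - B1 t \<and> G2 t = A2 t - B2 t" using GA dI by auto
    show "convex_on {0..\<delta>} (\<lambda>t. w t + G1 t)"
      by (rule convex_on_cong'[of _ "\<lambda>t. (A1 t + A1 t) + (A2 t + B2 t)"])
        (use a e in \<open>auto simp: w_def intro!: convex_on_add\<close>)
    show "convex_on {0..\<delta>} (\<lambda>t. w t - G1 t)"
      by (rule convex_on_cong'[of _ "\<lambda>t. (B1 t + B1 t) + (A2 t + B2 t)"])
        (use a e in \<open>auto simp: w_def intro!: convex_on_add\<close>)
    show "convex_on {0..\<delta>} (\<lambda>t. w t + G2 t)"
      by (rule convex_on_cong'[of _ "\<lambda>t. (A1 t + B1 t) + (A2 t + A2 t)"])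
        (use a e in \<open>auto simp: w_def intro!: convex_on_add\<close>)
    show "convex_on {0..\<delta>} (\<lambda>t. w t - G2 t)"
      by (rule convex_on_cong'[of _ "\<lambda>t. (A1 t + B1 t) + (B2 t + B2 t)"])
        (use a e in \<open>auto simp: w_def intro!: convex_on_add\<close>)
  qed
  have G1cont: "continuous_on {0..\<delta>} G1"
  proof -
    have "continuous_on {0..\<delta>} (\<lambda>t. (t, g t))"
      using continuous_on_subset[OF gcont] by (intro continuous_on_Pair continuous_on_id) auto
    moreover have "(\<lambda>t. (t, g t)) ` {0..\<delta>} \<subseteq> U0" using inK dI KU by auto
    ultimately show ?thesis unfolding G1_def
      using continuous_on_compose2[OF continuous_on_fst[OF Fcont]] by blast
  qed
  have m: "c/2 > 0" and M2: "3 * \<epsilon> \<ge> 0" using c \<epsilon> by auto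
  have DCR: "DCR_on {0..c/2*\<delta>} (\<lambda>x. G2 (invf G1 \<delta> x))"
    by (rule inv_comp_DCR[OF \<delta>(1) m M2 G1cont G10 slG1 slG2 slw cvx])
  have sl1': "c/2 * (t - s) \<le> G1 t - G1 s" if "0 \<le> s" "s < t" "t \<le> \<delta>" for s t
  proof -
    have "c/2 * (t - s) \<le> slope G1 s t * (t - s)" using slG1[OF that] that by (simp add: mult_right_mono)
    thus ?thesis using slope_mult[of s t G1] that by (simp add: mult.commute)
  qed
  have ip1: "invf G1 \<delta> x \<in> {0..\<delta>} \<and> G1 (invf G1 \<delta> x) = x" if "x \<in> {0..c/2*\<delta>}" for x
    by (rule invf_props(1)[of \<delta> "c/2" G1, OF \<delta>(1) m G1cont G10 _ that], rule sl1', auto)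
  have ip2: "invf G1 \<delta> (G1 t) = t" if "t \<in> {0..\<delta>}" for t
    by (rule invf_props(2)[of \<delta> "c/2" G1, OF \<delta>(1) m G1cont G10 _ that], rule sl1', auto)
  have dd: "has_onesided_dirderiv (\<lambda>x. G2 (invf G1 \<delta> x)) 0 1 0"
    unfolding has_onesided_dirderiv_def
  proof -
    have p0: "invf G1 \<delta> 0 = 0" using ip2[of 0] G10 \<delta> by simp
    have "((\<lambda>x. G2 (invf G1 \<delta> x) / x) \<longlongrightarrow> 0) (at_right 0)"
    proof (rule right_smallI)
      fix e :: real assume e: "e > 0"
      obtain \<tau> where \<tau>: "\<tau> > 0" "\<And>t. 0 < t \<Longrightarrow> t < \<tau> \<Longrightarrow> \<bar>G2 t / t - 0\<bar> < e * (c/2)"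
        using right_small[OF lim2, of "e * (c/2)"] e c by auto
      show "\<exists>\<tau>>0. \<forall>t. 0 < t \<longrightarrow> t < \<tau> \<longrightarrow> \<bar>G2 (invf G1 \<delta> t) / t - 0\<bar> < e"
      proof (intro exI[of _ "min (\<tau> * (c/2)) (c/2*\<delta>)"] conjI allI impI)
        show "0 < min (\<tau> * (c/2)) (c/2*\<delta>)" using \<tau> c \<delta> by simp
        fix x assume x: "0 < x" "x < min (\<tau> * (c/2)) (c/2*\<delta>)"
        hence xI: "x \<in> {0..c/2*\<delta>}" by auto
        define t where "t = invf G1 \<delta> x"
        have t: "t \<in> {0..\<delta>}" "G1 t = x" using ip1[OF xI] unfolding t_def by auto
        have tpos: "t > 0" using t G10 x by (cases "t = 0") auto
        have "c/2 * (t - 0) \<le> G1 t - G1 0" using sl1'[of 0 t] t tpos by auto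
        hence tx: "c/2 * t \<le> x" using t G10 by simp
        hence "c/2 * t < c/2 * \<tau>" using x by (simp add: mult.commute)
        hence "t < \<tau>" using c by simp
        hence "\<bar>G2 t / t\<bar> < e * (c/2)" using \<tau>(2)[OF tpos] by simp
        hence "\<bar>G2 t\<bar> < e * (c/2) * t" using tpos by (simp add: abs_div divide_less_eq)
        also have "\<dots> \<le> e * x" using tx e by (simp add: mult.assoc mult_left_mono)
        finally show "\<bar>G2 (invf G1 \<delta> x) / x - 0\<bar> < e" unfolding t_def[symmetric]
          using x by (simp add: abs_div divide_less_eq mult.commute)
      qed
    qed
    thus "((\<lambda>t. (G2 (invf G1 \<delta> (0 + t *\<^sub>R 1)) - G2 (invf G1 \<delta> 0)) /\<^sub>R t) \<longlongrightarrow> 0) (at_right 0)"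
      using p0 G20 by (simp add: divide_inverse mult.commute)
  qed
  show ?thesis
    apply (rule exI[of _ \<delta>])
    using \<delta>(1) inK dI DCR dd sl1' unfolding K_def G1_def G2_def by auto
qed

lemma local_mono:
  fixes d :: "real \<Rightarrow> real"
  assumes cont: "continuous_on {\<alpha>..\<beta>} d" and ab: "\<alpha> \<le> \<beta>"
    and loc: "\<And>x. x \<in> {\<alpha>..<\<beta>} \<Longrightarrow> \<exists>\<epsilon>>0. \<forall>y. x < y \<longrightarrow> y < x + \<epsilon> \<longrightarrow> y \<le> \<beta> \<longrightarrow> d x \<le> d y"
  shows "d \<alpha> \<le> d \<beta>"
proof -
  define A where "A = {x \<in> {\<alpha>..\<beta>}. d \<alpha> \<le> d x}"
  have cA: "closed A" unfolding A_def
    by (rule continuous_on_closed_Collect_le[OF continuous_on_const cont closed_atLeastAtMost])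
  have nA: "A \<noteq> {}" using ab unfolding A_def by auto
  have bA: "bdd_above A" unfolding A_def by (rule bdd_aboveI[of _ \<beta>]) auto
  define \<sigma> where "\<sigma> = Sup A"
  have sA: "\<sigma> \<in> A" unfolding \<sigma>_def by (rule closed_contains_Sup[OF nA bA cA])
  have "\<sigma> = \<beta>"
  proof (rule ccontr)
    assume "\<sigma> \<noteq> \<beta>"
    hence lt: "\<sigma> < \<beta>" using sA unfolding A_def by auto
    hence "\<sigma> \<in> {\<alpha>..<\<beta>}" using sA unfolding A_def by auto
    from loc[OF this] obtain \<epsilon> where \<epsilon>: "\<epsilon> > 0" "\<forall>y. \<sigma> < y \<longrightarrow> y < \<sigma> + \<epsilon> \<longrightarrow> y \<le> \<beta> \<longrightarrow> d \<sigma> \<le> d y" by blast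
    define y where "y = min (\<sigma> + \<epsilon>/2) \<beta>"
    have y: "\<sigma> < y" "y < \<sigma> + \<epsilon>" "y \<le> \<beta>" unfolding y_def using lt \<epsilon> by auto
    hence "d \<sigma> \<le> d y" using \<epsilon> by auto
    moreover have "d \<alpha> \<le> d \<sigma>" "\<alpha> \<le> \<sigma>" using sA unfolding A_def by auto
    ultimately have "y \<in> A" unfolding A_def using y by auto
    hence "y \<le> \<sigma>" unfolding \<sigma>_def by (rule cSup_upper[OF _ bA])
    thus False using y by simp
  qed
  thus ?thesis using sA unfolding A_def by auto
qed

lemma invf_eq:
  assumes m: "m > 0"
    and sl: "\<And>s t. 0 \<le> s \<Longrightarrow> s < t \<Longrightarrow> t \<le> \<delta> \<Longrightarrow> m * (t - s) \<le> G t - G s"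
    and t: "t \<in> {0..\<delta>}" "G t = x"
  shows "invf G \<delta> x = t"
proof -
  have inj: "s = t" if "s \<in> {0..\<delta>}" "t \<in> {0..\<delta>}" "G s = G t" for s t
  proof (rule ccontr)
    assume "s \<noteq> t"
    then consider "s < t" | "t < s" by linarith
    thus False
    proof cases
      case 1
      hence "0 < m * (t - s)" using m by simp
      thus False using sl[of s t] that 1 by auto
    next
      case 2
      hence "0 < m * (s - t)" using m by simp
      thus False using sl[of t s] that 2 by auto
    qed
  qed
  show ?thesis unfolding invf_def by (rule the_equality) (use t inj in blast)+
qed

lemma DCR_mono: "DCR_on D f \<Longrightarrow> D' \<subseteq> D \<Longrightarrow> D' \<noteq> {} \<Longrightarrow> DCR_on D' f"
  unfolding DCR_on_def by blast

lemma DC_cont: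
  fixes g :: "real \<Rightarrow> real"
  assumes "DC_on UNIV g" shows "continuous_on UNIV g"
proof -
  obtain p q where cp: "convex_on UNIV p" and cq: "convex_on UNIV q" and gpq: "\<And>x. g x = p x - q x"
    using assms unfolding DC_on_def by blast
  have "continuous_on UNIV (\<lambda>x. p x - q x)"
    using convex_on_continuous[OF open_UNIV cp] convex_on_continuous[OF open_UNIV cq]
    by (intro continuous_on_diff)
  thus ?thesis using gpq by simp
qed

lemma dir_to_lim:
  fixes f g :: "real \<Rightarrow> real"
  assumes d: "has_onesided_dirderiv f 0 1 0" and f0: "f 0 = 0" and r: "r > 0"
    and eq: "\<And>x. x \<in> {0..r} \<Longrightarrow> f x = g x"
  shows "((\<lambda>t. g t / t) \<longlongrightarrow> 0) (at_right 0)"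
proof -
  have e: "(\<lambda>t. (f (0 + t *\<^sub>R 1) - f 0) /\<^sub>R t) = (\<lambda>t. f t / t)"
    by (rule ext) (simp add: f0 divide_inverse_commute)
  have lim: "((\<lambda>t. f t / t) \<longlongrightarrow> 0) (at_right 0)"
    using d unfolding has_onesided_dirderiv_def e .
  have ev: "eventually (\<lambda>t. f t / t = g t / t) (at_right 0)"
    unfolding eventually_at_right_field
  proof (intro exI[of _ r] conjI allI impI)
    fix y :: real assume "0 < y" "y < r"
    thus "f y / y = g y / y" using eq[of y] by simp
  qed (use r in simp)
  show ?thesis using tendsto_cong[OF ev, of 0] lim by simp
qed

lemma graph_on_iff: "p \<in> graph_on D f \<longleftrightarrow> fst p \<in> D \<and> snd p = f (fst p)"
  unfolding graph_on_def by (cases p) auto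

theorem lemma5p10:
  fixes G S :: "(real \<times> real) set"
    and F :: "real \<times> real \<Rightarrow> real \<times> real"
    and c :: real
  assumes "open G" and "(0, 0) \<in> G" and "c > 0"
    and "locally_DC_map G F"
    and "F (0, 0) = (0, 0)"
    and "has_onesided_dirderiv F (0, 0) (1, 0) (c, 0)"
    and "S \<subseteq> G" and "s_set S"
  shows "\<exists>a>0. \<exists>b>0.
           s_set (F ` (S \<inter> {p. fst p \<le> a}) \<inter> {p. fst p \<le> b})"
proof -
  note c = \<open>c > 0\<close> and F0 = \<open>F (0, 0) = (0, 0)\<close>
  obtain U0 where U0: "open U0" "convex U0" "(0, 0) \<in> U0" "U0 \<subseteq> G" "DC_map_on U0 F"
    using \<open>locally_DC_map G F\<close> \<open>(0, 0) \<in> G\<close> unfolding locally_DC_map_def by blast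
  obtain u1 v1 where cu1: "convex_on U0 u1" and cv1: "convex_on U0 v1"
    and e1: "\<And>x. x \<in> U0 \<Longrightarrow> fst (F x) = u1 x - v1 x"
    using U0(5) unfolding DC_map_on_def DC_on_def by blast
  obtain u2 v2 where cu2: "convex_on U0 u2" and cv2: "convex_on U0 v2"
    and e2: "\<And>x. x \<in> U0 \<Longrightarrow> snd (F x) = u2 x - v2 x"
    using U0(5) unfolding DC_map_on_def DC_on_def by blast
  have Feq: "F z = (u1 z - v1 z, u2 z - v2 z)" if "z \<in> U0" for z
    using e1[OF that] e2[OF that] by (simp add: prod_eq_iff)
  have Fcont: "continuous_on U0 F"
  proof (rule continuous_on_eq)
    show "continuous_on U0 (\<lambda>z. (u1 z - v1 z, u2 z - v2 z))"
      using convex_on_continuous[OF U0(1) cu1] convex_on_continuous[OF U0(1) cv1]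
        convex_on_continuous[OF U0(1) cu2] convex_on_continuous[OF U0(1) cv2]
      by (intro continuous_on_Pair continuous_on_diff)
  qed (use Feq in auto)
  have "(0::real \<times> real) \<in> U0" using U0(3) by (simp add: zero_prod_def)
  then obtain e where e: "e > 0" "ball 0 e \<subseteq> U0"
    using U0(1) unfolding open_contains_ball by blast
  define \<rho> where "\<rho> = e / 4"
  have \<rho>: "\<rho> > 0" unfolding \<rho>_def using e by simp
  have sub: "cball 0 (2 * \<rho>) \<subseteq> U0"
  proof -
    have "cball 0 (2 * \<rho>) \<subseteq> ball (0::real \<times> real) e" unfolding \<rho>_def using e by (auto simp: subset_iff)
    thus ?thesis using e by blast
  qed
  have KU: "cball 0 \<rho> \<subseteq> U0" using sub subset_cball[of \<rho> "2 * \<rho>" 0] \<rho> by auto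
  obtain L1 where L1: "L1 \<ge> 0" "\<forall>t y1 y2. (t, y1) \<in> cball 0 \<rho> \<longrightarrow> (t, y2) \<in> cball 0 \<rho> \<longrightarrow> \<bar>u1 (t, y1) - u1 (t, y2)\<bar> \<le> L1 * \<bar>y1 - y2\<bar>"
    using vert_lip[OF U0(1) cu1 \<rho> sub] by blast
  obtain L2 where L2: "L2 \<ge> 0" "\<forall>t y1 y2. (t, y1) \<in> cball 0 \<rho> \<longrightarrow> (t, y2) \<in> cball 0 \<rho> \<longrightarrow> \<bar>v1 (t, y1) - v1 (t, y2)\<bar> \<le> L2 * \<bar>y1 - y2\<bar>"
    using vert_lip[OF U0(1) cv1 \<rho> sub] by blast
  obtain L3 where L3: "L3 \<ge> 0" "\<forall>t y1 y2. (t, y1) \<in> cball 0 \<rho> \<longrightarrow> (t, y2) \<in> cball 0 \<rho> \<longrightarrow> \<bar>u2 (t, y1) - u2 (t, y2)\<bar> \<le> L3 * \<bar>y1 - y2\<bar>"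
    using vert_lip[OF U0(1) cu2 \<rho> sub] by blast
  obtain L4 where L4: "L4 \<ge> 0" "\<forall>t y1 y2. (t, y1) \<in> cball 0 \<rho> \<longrightarrow> (t, y2) \<in> cball 0 \<rho> \<longrightarrow> \<bar>v2 (t, y1) - v2 (t, y2)\<bar> \<le> L4 * \<bar>y1 - y2\<bar>"
    using vert_lip[OF U0(1) cv2 \<rho> sub] by blast
  define L where "L = L1 + L2 + L3 + L4"
  have L: "L \<ge> 0" unfolding L_def using L1 L2 L3 L4 by simp
  have lip: "\<bar>h (t, y1) - h (t, y2)\<bar> \<le> L * \<bar>y1 - y2\<bar>"
    if "h \<in> {u1, v1, u2, v2}" "(t, y1) \<in> cball 0 \<rho>" "(t, y2) \<in> cball 0 \<rho>" for h t y1 y2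
  proof -
    have le: "Li * \<bar>y1 - y2\<bar> \<le> L * \<bar>y1 - y2\<bar>" if "Li \<le> L" for Li
      using that by (simp add: mult_right_mono)
    have LL: "L1 \<le> L" "L2 \<le> L" "L3 \<le> L" "L4 \<le> L" unfolding L_def using L1 L2 L3 L4 by linarith+
    have "h = u1 \<or> h = v1 \<or> h = u2 \<or> h = v2" using that(1) by simp
    thus ?thesis
    proof (elim disjE)
      assume "h = u1" thus ?thesis using L1(2) that(2,3) le[OF LL(1)] by (meson order_trans)
    next
      assume "h = v1" thus ?thesis using L2(2) that(2,3) le[OF LL(2)] by (meson order_trans)
    next
      assume "h = u2" thus ?thesis using L3(2) that(2,3) le[OF LL(3)] by (meson order_trans)
    next
      assume "h = v2" thus ?thesis using L4(2) that(2,3) le[OF LL(4)] by (meson order_trans)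
    qed
  qed
  have dF: "((\<lambda>t. F (t, 0) /\<^sub>R t) \<longlongrightarrow> (c, 0)) (at_right 0)"
  proof -
    have "(\<lambda>t. (F ((0, 0) + t *\<^sub>R (1, 0)) - F (0, 0)) /\<^sub>R t) = (\<lambda>t. F (t, 0) /\<^sub>R t)"
      by (rule ext) (simp add: F0 zero_prod_def)
    thus ?thesis using \<open>has_onesided_dirderiv F (0, 0) (1, 0) (c, 0)\<close>
      unfolding has_onesided_dirderiv_def by simp
  qed
  have d1: "((\<lambda>t. fst (F (t, 0)) / t) \<longlongrightarrow> c) (at_right 0)"
    using tendsto_fst[OF dF] by (simp add: divide_inverse_commute)
  have d2: "((\<lambda>t. snd (F (t, 0)) / t) \<longlongrightarrow> 0) (at_right 0)"
    using tendsto_snd[OF dF] by (simp add: divide_inverse_commute)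
  obtain r Fs H where S: "S \<noteq> {}" "closed S" "r > 0" "finite Fs"
    and Fs: "\<And>f. f \<in> Fs \<Longrightarrow> DCR_on {0..r} f \<and> f 0 = 0 \<and> has_onesided_dirderiv f 0 1 0"
    and SF: "S \<subseteq> (\<Union>f\<in>Fs. graph_on {0..r} f)"
    and H: "\<And>h. h \<in> H \<Longrightarrow> continuous_on {0..r} h" and SH: "S = (\<Union>h\<in>H. graph_on {0..r} h)"
    using \<open>s_set S\<close> unfolding s_set_def by blast
  define phi where "phi g \<delta> x = snd (F (invf (\<lambda>t. fst (F (t, g t))) \<delta> x, g (invf (\<lambda>t. fst (F (t, g t))) \<delta> x)))"
    for g :: "real \<Rightarrow> real" and \<delta> x
  define PC where "PC f g \<delta> \<longleftrightarrow> DC_on UNIV g \<and> (\<forall>x\<in>{0..r}. f x = g x) \<and> 0 < \<delta> \<and>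
     (\<forall>t\<in>{0..\<delta>}. (t, g t) \<in> cball 0 \<rho>) \<and>
     (\<forall>s t. 0 \<le> s \<longrightarrow> s < t \<longrightarrow> t \<le> \<delta> \<longrightarrow> c/2 * (t - s) \<le> fst (F (t, g t)) - fst (F (s, g s))) \<and>
     DCR_on {0..c/2*\<delta>} (phi g \<delta>) \<and> has_onesided_dirderiv (phi g \<delta>) 0 1 0" for f g \<delta>
  have ex: "\<forall>f\<in>Fs. \<exists>gd. PC f (fst gd) (snd gd)"
  proof
    fix f assume f: "f \<in> Fs"
    obtain g where g: "DC_on UNIV g" "\<forall>x\<in>{0..r}. f x = g x"
      using Fs[OF f] unfolding DCR_on_def by blast
    have g0: "g 0 = 0" using g(2) Fs[OF f] S(3) by auto
    have gd: "((\<lambda>t. g t / t) \<longlongrightarrow> 0) (at_right 0)"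
      using dir_to_lim[of f r g] Fs[OF f] S(3) g(2) by blast
    obtain \<delta> where \<delta>: "\<delta> > 0" and pc: "(\<forall>t\<in>{0..\<delta>}. (t, g t) \<in> cball 0 \<rho>) \<and>
     (\<forall>s t. 0 \<le> s \<longrightarrow> s < t \<longrightarrow> t \<le> \<delta> \<longrightarrow> c/2 * (t - s) \<le> fst (F (t, g t)) - fst (F (s, g s))) \<and>
     DCR_on {0..c/2*\<delta>} (\<lambda>x. snd (F (invf (\<lambda>t. fst (F (t, g t))) \<delta> x, g (invf (\<lambda>t. fst (F (t, g t))) \<delta> x)))) \<and>
     has_onesided_dirderiv (\<lambda>x. snd (F (invf (\<lambda>t. fst (F (t, g t))) \<delta> x, g (invf (\<lambda>t. fst (F (t, g t))) \<delta> x)))) 0 1 0"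
      using per_curve[OF U0(1) \<rho> sub cu1 cv1 cu2 cv2 Feq Fcont L lip c F0 d1 d2 g(1) g0 gd] by blast
    have "PC f g \<delta>" unfolding PC_def phi_def[abs_def] using g \<delta> pc by blast
    thus "\<exists>gd. PC f (fst gd) (snd gd)" by (intro exI[of _ "(g, \<delta>)"]) simp
  qed
  obtain GD where GD0: "\<forall>f\<in>Fs. PC f (fst (GD f)) (snd (GD f))" using bchoice[OF ex] by blast
  have GD: "PC f (fst (GD f)) (snd (GD f))" if "f \<in> Fs" for f using GD0 that by blast
  define gg where "gg f = fst (GD f)" for f
  define dd where "dd f = snd (GD f)" for f
  have PCf: "PC f (gg f) (dd f)" if "f \<in> Fs" for f using GD[OF that] unfolding gg_def dd_def .

  define a where "a = Min (insert r (dd ` Fs))"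
  have fin: "finite (insert r (dd ` Fs))" using S(4) by simp
  have dpos: "dd f > 0" if "f \<in> Fs" for f using PCf[OF that] unfolding PC_def by blast
  have a: "a > 0" unfolding a_def using fin S(3) dpos by (subst Min_gr_iff) auto
  have ar: "a \<le> r" unfolding a_def using fin by simp
  have ad: "a \<le> dd f" if "f \<in> Fs" for f unfolding a_def using fin that by simp
  define m where "m = c / 2"
  have m: "m > 0" unfolding m_def using c by simp
  define b where "b = m * a"
  have b: "b > 0" unfolding b_def using m a by simp
  define G1 where "G1 f t = fst (F (t, gg f t))" for f t
  have ggf: "f t = gg f t" if "f \<in> Fs" "t \<in> {0..r}" for f t
  proof -
    have "\<forall>x\<in>{0..r}. f x = gg f x" using PCf[OF that(1)] unfolding PC_def by blast
    thus ?thesis using that(2) by blast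
  qed
  have ggK: "(t, gg f t) \<in> cball 0 \<rho>" if "f \<in> Fs" "t \<in> {0..dd f}" for f t
  proof -
    have "\<forall>t\<in>{0..dd f}. (t, gg f t) \<in> cball 0 \<rho>" using PCf[OF that(1)] unfolding PC_def by blast
    thus ?thesis using that(2) by blast
  qed
  have slf: "m * (t - s) \<le> G1 f t - G1 f s" if "f \<in> Fs" "0 \<le> s" "s < t" "t \<le> dd f" for f s t
  proof -
    have "\<forall>s t. 0 \<le> s \<longrightarrow> s < t \<longrightarrow> t \<le> dd f \<longrightarrow> c/2 * (t - s) \<le> fst (F (t, gg f t)) - fst (F (s, gg f s))"
      using PCf[OF that(1)] unfolding PC_def by blast
    thus ?thesis using that(2-4) unfolding G1_def m_def by blast
  qed
  have gg0: "gg f 0 = 0" if "f \<in> Fs" for f using ggf[OF that, of 0] Fs[OF that] S(3) by simp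
  have G10: "G1 f 0 = 0" if "f \<in> Fs" for f unfolding G1_def using gg0[OF that] F0 by simp
  have Pt: "\<exists>f\<in>Fs. fst q \<in> {0..a} \<and> q = (fst q, gg f (fst q))" if qS: "q \<in> S" "fst q \<le> a" for q
  proof -
    obtain f where f: "f \<in> Fs" "q \<in> graph_on {0..r} f" using SF qS(1) by blast
    hence "fst q \<in> {0..r}" "snd q = f (fst q)" unfolding graph_on_iff by auto
    moreover have "fst q \<le> a" by (rule qS(2))
    ultimately have "fst q \<in> {0..a}" "q = (fst q, gg f (fst q))" using ggf[OF f(1), of "fst q"]
      by (auto simp: prod_eq_iff)
    thus ?thesis using f(1) by blast
  qed
  have SK: "q \<in> cball 0 \<rho>" if qS: "q \<in> S" "fst q \<le> a" for q
  proof -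
    obtain f where f: "f \<in> Fs" "fst q \<in> {0..a}" "q = (fst q, gg f (fst q))" using Pt[OF qS] by blast
    have "fst q \<in> {0..dd f}" using f(2) ad[OF f(1)] by auto
    from ggK[OF f(1) this] show ?thesis using f(3) by simp
  qed
  have S00: "(0, 0) \<in> S"
  proof -
    obtain q where "q \<in> S" using S(1) by blast
    then obtain h where h: "h \<in> H" unfolding SH by blast
    have "(0, h 0) \<in> graph_on {0..r} h" unfolding graph_on_iff using S(3) by simp
    hence h0S: "(0, h 0) \<in> S" unfolding SH using h by blast
    then obtain f where f: "f \<in> Fs" "(0, h 0) \<in> graph_on {0..r} f" using SF by blast
    hence "h 0 = f 0" unfolding graph_on_iff by simp
    with Fs[OF f(1)] h0S show ?thesis by simp
  qed
  define S' where "S' = F ` (S \<inter> {p. fst p \<le> a}) \<inter> {p. fst p \<le> b}"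
  have cl: "closed S'"
  proof -
    have "closed (S \<inter> {p. fst p \<le> a})" using S(2) by (intro closed_Int closed_Collect_le continuous_intros) auto
    moreover have "S \<inter> {p. fst p \<le> a} \<subseteq> cball 0 \<rho>" using SK by auto
    hence "bounded (S \<inter> {p. fst p \<le> a})" by (rule bounded_subset[OF bounded_cball])
    ultimately have cp: "compact (S \<inter> {p. fst p \<le> a})" using compact_eq_bounded_closed by blast
    have "continuous_on (S \<inter> {p. fst p \<le> a}) F"
      by (rule continuous_on_subset[OF Fcont]) (use SK KU in auto)
    hence "compact (F ` (S \<inter> {p. fst p \<le> a}))" using compact_continuous_image cp by blast
    hence "closed (F ` (S \<inter> {p. fst p \<le> a}))" by (rule compact_imp_closed)
    thus ?thesis unfolding S'_def by (intro closed_Int closed_Collect_le continuous_intros) auto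
  qed
  have ne: "S' \<noteq> {}"
  proof -
    have "(0, 0) \<in> S \<inter> {p. fst p \<le> a}" using S00 a by simp
    hence "F (0, 0) \<in> F ` (S \<inter> {p. fst p \<le> a})" by (rule imageI)
    hence "F (0, 0) \<in> S'" unfolding S'_def using b F0 by simp
    thus ?thesis by blast
  qed
  have cover: "\<exists>Fs'. finite Fs' \<and>
           (\<forall>f\<in>Fs'. DCR_on {0..b} f \<and> f 0 = 0 \<and> has_onesided_dirderiv f 0 1 0) \<and>
           S' \<subseteq> (\<Union>f\<in>Fs'. graph_on {0..b} f)"
  proof (intro exI[of _ "(\<lambda>f. phi (gg f) (dd f)) ` Fs"] conjI ballI)
    show "finite ((\<lambda>f. phi (gg f) (dd f)) ` Fs)" using S(4) by simp
    fix \<phi> assume "\<phi> \<in> (\<lambda>f. phi (gg f) (dd f)) ` Fs"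
    then obtain f where f: "f \<in> Fs" "\<phi> = phi (gg f) (dd f)" by blast
    have "{0..b} \<subseteq> {0..c/2 * dd f}" unfolding b_def m_def using ad[OF f(1)] c
      by (auto intro: order_trans mult_left_mono)
    thus "DCR_on {0..b} \<phi>" using PCf[OF f(1)] DCR_mono b unfolding PC_def f(2) by auto
    have "invf (G1 f) (dd f) 0 = 0"
      by (rule invf_eq[OF m slf[OF f(1)]]) (use G10[OF f(1)] PCf[OF f(1)] in \<open>auto simp: PC_def\<close>)
    thus "\<phi> 0 = 0" unfolding f(2) phi_def using gg0[OF f(1)] F0 by (simp add: G1_def[abs_def])
    show "has_onesided_dirderiv \<phi> 0 1 0" using PCf[OF f(1)] unfolding PC_def f(2) by auto
  next
    show "S' \<subseteq> (\<Union>f\<in>(\<lambda>f. phi (gg f) (dd f)) ` Fs. graph_on {0..b} f)"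
    proof
      fix p assume "p \<in> S'"
      then obtain q where q: "q \<in> S" "fst q \<le> a" "p = F q" "fst p \<le> b" unfolding S'_def by auto
      obtain f where f: "f \<in> Fs" "fst q \<in> {0..a}" "q = (fst q, gg f (fst q))" using Pt[OF q(1,2)] by blast
      define t where "t = fst q"
      have t: "t \<in> {0..dd f}" using f(2) ad[OF f(1)] unfolding t_def by auto
      have fp: "fst p = G1 f t" unfolding q(3) G1_def t_def by (subst f(3)) simp
      have "0 \<le> fst p"
      proof (cases "t = 0")
        case True thus ?thesis using fp G10[OF f(1)] by simp
      next
        case False
        have "0 \<le> m * t" using m t by simp
        thus ?thesis using False slf[OF f(1), of 0 t] t fp G10[OF f(1)] by auto
      qed
      have inv: "invf (G1 f) (dd f) (fst p) = t" by (rule invf_eq[OF m slf[OF f(1)] t fp[symmetric]])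
      have "snd p = phi (gg f) (dd f) (fst p)"
        unfolding phi_def using inv unfolding G1_def[abs_def] q(3) t_def by (subst f(3)) simp
      hence "p \<in> graph_on {0..b} (phi (gg f) (dd f))" unfolding graph_on_iff using \<open>0 \<le> fst p\<close> q(4) by auto
      thus "p \<in> (\<Union>f\<in>(\<lambda>f. phi (gg f) (dd f)) ` Fs. graph_on {0..b} f)" using f(1) by blast
    qed
  qed

  define kh where "kh h t = fst (F (t, h t))" for h :: "real \<Rightarrow> real" and t
  define eta where "eta h x = snd (F (invf (kh h) a x, h (invf (kh h) a x)))" for h :: "real \<Rightarrow> real" and x
  have hS: "(t, h t) \<in> S" if h: "h \<in> H" and t: "t \<in> {0..r}" for h t
  proof -
    have "(t, h t) \<in> graph_on {0..r} h" unfolding graph_on_iff using t by simp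
    thus ?thesis unfolding SH using h by blast
  qed
  have hF: "\<exists>f\<in>Fs. h t = gg f t" if h: "h \<in> H" and t: "t \<in> {0..a}" for h t
  proof -
    have tr: "t \<in> {0..r}" using t ar by auto
    obtain f where f: "f \<in> Fs" "(t, h t) = (t, gg f t)" using Pt[OF hS[OF h tr]] t by auto
    thus ?thesis by auto
  qed
  have hK: "(t, h t) \<in> cball 0 \<rho>" if h: "h \<in> H" and t: "t \<in> {0..a}" for h t
    using SK[OF hS[OF h]] t ar by auto
  have kh0: "kh h 0 = 0" if h: "h \<in> H" for h
  proof -
    obtain f where f: "f \<in> Fs" "h 0 = gg f 0" using hF[OF h, of 0] a by auto
    thus ?thesis unfolding kh_def using gg0[OF f(1)] F0 by simp
  qed
  have hcont: "continuous_on {0..a} (kh h)" if h: "h \<in> H" for h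
  proof -
    have "continuous_on {0..a} (\<lambda>t. (t, h t))"
      using continuous_on_subset[OF H[OF h]] ar by (intro continuous_on_Pair continuous_on_id) auto
    moreover have "(\<lambda>t. (t, h t)) ` {0..a} \<subseteq> U0" using hK[OF h] KU by auto
    ultimately show ?thesis unfolding kh_def[abs_def]
      using continuous_on_compose2[OF continuous_on_fst[OF Fcont]] by blast
  qed
  have loc: "\<exists>\<epsilon>>0. \<forall>y. x < y \<longrightarrow> y < x + \<epsilon> \<longrightarrow> y \<le> a \<longrightarrow> m * (y - x) \<le> kh h y - kh h x"
    if h: "h \<in> H" and x: "x \<in> {0..<a}" for h x
  proof -
    define J where "J = {f\<in>Fs. gg f x \<noteq> h x}"
    have finJ: "finite J" using S(4) unfolding J_def by simp
    have xr: "x \<in> {0..r}" using x ar by auto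
    have evf: "\<forall>f\<in>J. eventually (\<lambda>y. gg f y - h y \<noteq> 0) (at x within {0..r})"
    proof
      fix f assume f: "f \<in> J"
      have fF: "f \<in> Fs" using f unfolding J_def by simp
      have "DC_on UNIV (gg f)" using PCf[OF fF] unfolding PC_def by blast
      hence "continuous_on {0..r} (gg f)" using DC_cont continuous_on_subset by blast
      hence "continuous_on {0..r} (\<lambda>y. gg f y - h y)" using H[OF h] by (intro continuous_on_diff)
      hence "((\<lambda>y. gg f y - h y) \<longlongrightarrow> gg f x - h x) (at x within {0..r})"
        using xr unfolding continuous_on_def by blast
      moreover have "gg f x - h x \<noteq> 0" using f unfolding J_def by simp
      ultimately show "eventually (\<lambda>y. gg f y - h y \<noteq> 0) (at x within {0..r})"
        by (rule tendsto_imp_eventually_ne)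
    qed
    have "eventually (\<lambda>y. \<forall>f\<in>J. gg f y - h y \<noteq> 0) (at x within {0..r})"
      by (rule eventually_ball_finite[OF finJ evf])
    then obtain d where d: "d > 0" "\<forall>y\<in>{0..r}. y \<noteq> x \<and> dist y x < d \<longrightarrow> (\<forall>f\<in>J. gg f y - h y \<noteq> 0)"
      unfolding eventually_at by blast
    show ?thesis
    proof (intro exI[of _ d] conjI allI impI d(1))
      fix y assume y: "x < y" "y < x + d" "y \<le> a"
      have yr: "y \<in> {0..r}" using y x ar by auto
      have nz: "\<forall>f\<in>J. gg f y - h y \<noteq> 0" using d(2) yr y by (auto simp: dist_real_def)
      obtain f where f: "f \<in> Fs" "h y = gg f y" using hF[OF h, of y] y x by auto
      have "f \<notin> J" using nz f by auto
      hence hx: "h x = gg f x" using f(1) unfolding J_def by auto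
      have "m * (y - x) \<le> G1 f y - G1 f x" using slf[OF f(1), of x y] x y ad[OF f(1)] by auto
      thus "m * (y - x) \<le> kh h y - kh h x" unfolding kh_def G1_def using f(2) hx by simp
    qed
  qed
  have hmono: "m * (t - s) \<le> kh h t - kh h s" if h: "h \<in> H" and st: "0 \<le> s" "s < t" "t \<le> a" for h s t
  proof -
    have "kh h s - m * s \<le> kh h t - m * t"
    proof (rule local_mono[where d = "\<lambda>y. kh h y - m * y"])
      show "continuous_on {s..t} (\<lambda>y. kh h y - m * y)"
        using continuous_on_subset[OF hcont[OF h], of "{s..t}"] st
        by (intro continuous_on_diff continuous_intros) auto
      show "s \<le> t" using st by simp
      fix x assume x: "x \<in> {s..<t}"
      hence "x \<in> {0..<a}" using st by auto
      from loc[OF h this] obtain \<epsilon> where \<epsilon>: "\<epsilon> > 0"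
        "\<forall>y. x < y \<longrightarrow> y < x + \<epsilon> \<longrightarrow> y \<le> a \<longrightarrow> m * (y - x) \<le> kh h y - kh h x" by blast
      show "\<exists>\<epsilon>>0. \<forall>y. x < y \<longrightarrow> y < x + \<epsilon> \<longrightarrow> y \<le> t \<longrightarrow> kh h x - m * x \<le> kh h y - m * y"
      proof (intro exI[of _ \<epsilon>] conjI allI impI \<epsilon>(1))
        fix y assume "x < y" "y < x + \<epsilon>" "y \<le> t"
        hence "m * (y - x) \<le> kh h y - kh h x" using \<epsilon>(2) st by auto
        thus "kh h x - m * x \<le> kh h y - m * y" by (simp add: algebra_simps)
      qed
    qed
    thus ?thesis by (simp add: algebra_simps)
  qed
  have kp1: "invf (kh h) a x \<in> {0..a} \<and> kh h (invf (kh h) a x) = x" if h: "h \<in> H" and x: "x \<in> {0..b}" for h x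
    by (rule invf_props(1)[of a m "kh h", OF a m hcont[OF h] kh0[OF h] _ x[unfolded b_def]], rule hmono[OF h], auto)
  have kpc: "continuous_on {0..b} (invf (kh h) a)" if h: "h \<in> H" for h
    unfolding b_def
    by (rule invf_props(3)[of a m "kh h", OF a m hcont[OF h] kh0[OF h]], rule hmono[OF h], auto)
  have etacont: "continuous_on {0..b} (eta h)" if h: "h \<in> H" for h
  proof -
    have im: "invf (kh h) a ` {0..b} \<subseteq> {0..r}" using kp1[OF h] ar by fastforce
    have "continuous_on {0..b} (\<lambda>x. h (invf (kh h) a x))"
      by (rule continuous_on_compose2[OF H[OF h] kpc[OF h] im])
    hence "continuous_on {0..b} (\<lambda>x. (invf (kh h) a x, h (invf (kh h) a x)))"
      using kpc[OF h] by (intro continuous_on_Pair)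
    moreover have "(\<lambda>x. (invf (kh h) a x, h (invf (kh h) a x))) ` {0..b} \<subseteq> U0"
      using hK[OF h] kp1[OF h] KU by auto
    ultimately show ?thesis unfolding eta_def[abs_def]
      using continuous_on_compose2[OF continuous_on_snd[OF Fcont]] by blast
  qed
  have Seq: "S' = (\<Union>h\<in>eta ` H. graph_on {0..b} h)"
  proof
    show "S' \<subseteq> (\<Union>h\<in>eta ` H. graph_on {0..b} h)"
    proof
      fix p assume "p \<in> S'"
      then obtain q where q: "q \<in> S" "fst q \<le> a" "p = F q" "fst p \<le> b" unfolding S'_def by auto
      obtain h where h: "h \<in> H" "q \<in> graph_on {0..r} h" using q(1) unfolding SH by blast
      define t where "t = fst q"
      have qt: "q = (t, h t)" using h(2) unfolding graph_on_iff t_def by (simp add: prod_eq_iff)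
      have t: "t \<in> {0..a}" using h(2) q(2) unfolding graph_on_iff t_def by auto
      have fp: "fst p = kh h t" unfolding q(3) qt kh_def by simp
      have "0 \<le> fst p"
      proof (cases "t = 0")
        case True thus ?thesis using fp kh0[OF h(1)] by simp
      next
        case False
        have "0 \<le> m * t" using m t by simp
        thus ?thesis using False hmono[OF h(1), of 0 t] t fp kh0[OF h(1)] by auto
      qed
      have inv: "invf (kh h) a (fst p) = t" by (rule invf_eq[OF m hmono[OF h(1)] t fp[symmetric]])
      have "snd p = eta h (fst p)" unfolding eta_def inv by (simp add: q(3) qt)
      hence "p \<in> graph_on {0..b} (eta h)" unfolding graph_on_iff using \<open>0 \<le> fst p\<close> q(4) by auto
      thus "p \<in> (\<Union>h\<in>eta ` H. graph_on {0..b} h)" using h(1) by blast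
    qed
    show "(\<Union>h\<in>eta ` H. graph_on {0..b} h) \<subseteq> S'"
    proof
      fix p assume "p \<in> (\<Union>h\<in>eta ` H. graph_on {0..b} h)"
      then obtain h where h: "h \<in> H" "p \<in> graph_on {0..b} (eta h)" by blast
      define x where "x = fst p"
      have x: "x \<in> {0..b}" "snd p = eta h x" using h(2) unfolding graph_on_iff x_def by auto
      define t where "t = invf (kh h) a x"
      have t: "t \<in> {0..a}" "kh h t = x" using kp1[OF h(1) x(1)] unfolding t_def by auto
      have tr: "t \<in> {0..r}" using t ar by auto
      have qS: "(t, h t) \<in> S \<inter> {p. fst p \<le> a}" using hS[OF h(1) tr] t by auto
      have "F (t, h t) = p" using t x unfolding kh_def eta_def t_def x_def by (simp add: prod_eq_iff)
      hence "p \<in> F ` (S \<inter> {p. fst p \<le> a})" using qS by blast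
      thus "p \<in> S'" unfolding S'_def using x(1) unfolding x_def by auto
    qed
  qed
  have "s_set S'"
    unfolding s_set_def
  proof (intro conjI ne cl exI[of _ b] b)
    show "\<exists>Fs'. finite Fs' \<and>
           (\<forall>f\<in>Fs'. DCR_on {0..b} f \<and> f 0 = 0 \<and> has_onesided_dirderiv f 0 1 0) \<and>
           S' \<subseteq> (\<Union>f\<in>Fs'. graph_on {0..b} f)" by (rule cover)
    show "\<exists>H'. (\<forall>h\<in>H'. continuous_on {0..b} h) \<and> S' = (\<Union>h\<in>H'. graph_on {0..b} h)"
      using etacont Seq by blast
  qed
  thus ?thesis unfolding S'_def using a b by blast
qed

end
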